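(* For each semiquasitriangular Hopf algebra $(H,R)$ with Drinfeld element $u=S(R^{(2)})R^{(1)}$, one has $S^2(u)=u$, $S^2(u^{-1})=u^{-1}$ and $uS(u)=S(u)u$.
   Context: All vector spaces are over a field $k$, $\otimes=\otimes_k$. For a Hopf algebra $H$ with comultiplication $\Delta$, counit $\epsilon$, antipode $S$, we use Sweedler notation $\Delta(h)=h_1\otimes h_2$, etc. $\operatorname{Z}(H)$ is the centre of $H$. For $R\in H\otimes H$ we write $R=R^{(1)}\otimes R^{(2)}$ (summation understood); $R'^{(1)}\otimes R'^{(2)}$ denotes another copy of $R$. Definition (semiquasitriangular Hopf algebra): a pair $(H,R)$ with $H$ a Hopf algebra with bijective antipode and $R\in H\otimes H$ invertible such that (1) $R^{(1)}_1\otimes R^{(1)}_2\otimes R^{(2)} = R^{(1)}\otimes R'^{(1)}\otimes R^{(2)}R'^{(2)}$; (2) $R^{(1)}\otimes R^{(2)}_1\otimes R^{(2)}_2 = R^{(1)}R'^{(1)}\otimes R'^{(2)}\otimes R^{(2)}$; (3) $R^{(1)}\otimes R^{(2)}_2R'^{(1)}\otimes R^{(2)}_1R'^{(2)} = R^{(1)}\otimes R'^{(1)}R^{(2)}_1\otimes R'^{(2)}R^{(2)}_2$; (4) $R^{(1)}_2R'^{(1)}\otimes R^{(1)}_1R'^{(2)}\otimes R^{(2)} = R'^{(1)}R^{(1)}_1\otimes R'^{(2)}R^{(1)}_2\otimes R^{(2)}$; (5) $\nu(h):=R^{(2)}h_2R'^{(2)}\otimes S(h_1)S(R^{(1)})h_3R'^{(1)}\in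 H\otimes\operatorname{Z}(H)$ for all $h\in H$; (6) $\nu(h)=R^{(1)}h_2R'^{(1)}\otimes S(R'^{(2)})S(h_1)R^{(2)}h_3$ for all $h\in H$. The Drinfeld element $u$ is invertible (with $u^{-1}=R^{(2)}S^2(R^{(1)})$). *)

theory Defs
  imports "HOL-Library.Poly_Mapping"
begin

text \<open>
  Vector spaces over a field 'k are modelled by a chosen basis: a vector of a
  space with basis indexed by type 'a is a finitely supported function
  'a =>0 'k.  The tensor product of spaces with bases 'a and 'c is the space with
  basis 'a * 'c; the triple tensor product uses the basis 'a * 'c * 'd.
  Linear maps are given by their values on basis vectors and extended linearly
  by hv_lin.  A Hopf algebra H is given by structure constants on a basis 'b:
  multiplication mu, unit eta, comultiplication delta, counit eps, antipode S.
\<close>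

definition hv_smul :: "'k::field \<Rightarrow> ('a \<Rightarrow>\<^sub>0 'k) \<Rightarrow> ('a \<Rightarrow>\<^sub>0 'k)" where
  "hv_smul c x = Poly_Mapping.map (\<lambda>v. c * v) x"

definition hv_lin :: "('a \<Rightarrow> ('c \<Rightarrow>\<^sub>0 'k::field)) \<Rightarrow> ('a \<Rightarrow>\<^sub>0 'k) \<Rightarrow> ('c \<Rightarrow>\<^sub>0 'k)" where
  "hv_lin f x = (\<Sum>a\<in>Poly_Mapping.keys x. hv_smul (Poly_Mapping.lookup x a) (f a))"

definition hv_fun :: "('a \<Rightarrow> 'k::field) \<Rightarrow> ('a \<Rightarrow>\<^sub>0 'k) \<Rightarrow> 'k" where
  "hv_fun f x = (\<Sum>a\<in>Poly_Mapping.keys x. Poly_Mapping.lookup x a * f a)"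

definition hv_basis :: "'a \<Rightarrow> ('a \<Rightarrow>\<^sub>0 'k::field)" where
  "hv_basis a = Poly_Mapping.single a 1"

definition hv_tens :: "('a \<Rightarrow>\<^sub>0 'k::field) \<Rightarrow> ('c \<Rightarrow>\<^sub>0 'k) \<Rightarrow> ('a \<times> 'c \<Rightarrow>\<^sub>0 'k)" where
  "hv_tens x y = hv_lin (\<lambda>a. hv_lin (\<lambda>c. hv_basis (a, c)) y) x"

definition hmul :: "('b \<Rightarrow> 'b \<Rightarrow> ('b \<Rightarrow>\<^sub>0 'k::field)) \<Rightarrow> ('b \<Rightarrow>\<^sub>0 'k) \<Rightarrow> ('b \<Rightarrow>\<^sub>0 'k) \<Rightarrow> ('b \<Rightarrow>\<^sub>0 'k)" where
  "hmul mu x y = hv_lin (\<lambda>a. hv_lin (\<lambda>b. mu a b) y) x"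

definition hmul2 :: "('b \<Rightarrow> 'b \<Rightarrow> ('b \<Rightarrow>\<^sub>0 'k::field)) \<Rightarrow> ('b \<times> 'b \<Rightarrow>\<^sub>0 'k) \<Rightarrow> ('b \<times> 'b \<Rightarrow>\<^sub>0 'k) \<Rightarrow> ('b \<times> 'b \<Rightarrow>\<^sub>0 'k)" where
  "hmul2 mu t s = hv_lin (\<lambda>(a, b). hv_lin (\<lambda>(c, d). hv_tens (mu a c) (mu b d)) s) t"

definition hDelta :: "('b \<Rightarrow> ('b \<times> 'b \<Rightarrow>\<^sub>0 'k::field)) \<Rightarrow> ('b \<Rightarrow>\<^sub>0 'k) \<Rightarrow> ('b \<times> 'b \<Rightarrow>\<^sub>0 'k)" where
  "hDelta delta x = hv_lin delta x"

definition hS :: "('b \<Rightarrow> ('b \<Rightarrow>\<^sub>0 'k::field)) \<Rightarrow> ('b \<Rightarrow>\<^sub>0 'k) \<Rightarrow> ('b \<Rightarrow>\<^sub>0 'k)" where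
  "hS S x = hv_lin S x"

definition hopf_algebra ::
  "('b \<Rightarrow> 'b \<Rightarrow> ('b \<Rightarrow>\<^sub>0 'k::field)) \<Rightarrow> ('b \<Rightarrow>\<^sub>0 'k) \<Rightarrow> ('b \<Rightarrow> ('b \<times> 'b \<Rightarrow>\<^sub>0 'k))
    \<Rightarrow> ('b \<Rightarrow> 'k) \<Rightarrow> ('b \<Rightarrow> ('b \<Rightarrow>\<^sub>0 'k)) \<Rightarrow> bool" where
  "hopf_algebra mu eta delta eps S \<longleftrightarrow>
     \<comment> \<open>associative unital algebra\<close>
     (\<forall>x y z. hmul mu (hmul mu x y) z = hmul mu x (hmul mu y z)) \<and>
     (\<forall>x. hmul mu eta x = x \<and> hmul mu x eta = x) \<and>
     \<comment> \<open>coassociativity: (\<Delta> \<otimes> id) \<Delta> = (id \<otimes> \<Delta>) \<Delta>\<close>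
     (\<forall>x. hv_lin (\<lambda>(a, c). hv_lin (\<lambda>(p, q). hv_basis (p, q, c)) (delta a)) (hDelta delta x)
        = hv_lin (\<lambda>(a, c). hv_tens (hv_basis a) (delta c)) (hDelta delta x)) \<and>
     \<comment> \<open>counit\<close>
     (\<forall>x. hv_lin (\<lambda>(a, c). hv_smul (eps a) (hv_basis c)) (hDelta delta x) = x \<and>
          hv_lin (\<lambda>(a, c). hv_smul (eps c) (hv_basis a)) (hDelta delta x) = x) \<and>
     \<comment> \<open>\<Delta> and \<epsilon> are algebra maps\<close>
     (\<forall>x y. hDelta delta (hmul mu x y) = hmul2 mu (hDelta delta x) (hDelta delta y)) \<and>
     hDelta delta eta = hv_tens eta eta \<and>
     (\<forall>x y. hv_fun eps (hmul mu x y) = hv_fun eps x * hv_fun eps y) \<and>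
     hv_fun eps eta = 1 \<and>
     \<comment> \<open>antipode: S(x_1) x_2 = \<epsilon>(x) 1 = x_1 S(x_2)\<close>
     (\<forall>x. hv_lin (\<lambda>(a, c). hmul mu (hS S (hv_basis a)) (hv_basis c)) (hDelta delta x)
            = hv_smul (hv_fun eps x) eta \<and>
          hv_lin (\<lambda>(a, c). hmul mu (hv_basis a) (hS S (hv_basis c))) (hDelta delta x)
            = hv_smul (hv_fun eps x) eta) \<and>
     \<comment> \<open>bijective antipode\<close>
     bij (hS S)"

definition hcentral :: "('b \<Rightarrow> 'b \<Rightarrow> ('b \<Rightarrow>\<^sub>0 'k::field)) \<Rightarrow> ('b \<Rightarrow>\<^sub>0 'k) \<Rightarrow> bool" where
  "hcentral mu z \<longleftrightarrow> (\<forall>x. hmul mu z x = hmul mu x z)"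

definition in_H_tensor_Z :: "('b \<Rightarrow> 'b \<Rightarrow> ('b \<Rightarrow>\<^sub>0 'k::field)) \<Rightarrow> ('b \<times> 'b \<Rightarrow>\<^sub>0 'k) \<Rightarrow> bool" where
  "in_H_tensor_Z mu t \<longleftrightarrow>
     (\<exists>ps. (\<forall>(a, z)\<in>set ps. hcentral mu z) \<and> t = sum_list (map (\<lambda>(a, z). hv_tens a z) ps))"

text \<open>Iterated coproduct h_1 \<otimes> h_2 \<otimes> h_3 = (\<Delta> \<otimes> id) \<Delta>(h).\<close>
definition hDelta2 :: "('b \<Rightarrow> ('b \<times> 'b \<Rightarrow>\<^sub>0 'k::field)) \<Rightarrow> ('b \<Rightarrow>\<^sub>0 'k) \<Rightarrow> ('b \<times> 'b \<times> 'b \<Rightarrow>\<^sub>0 'k)" where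
  "hDelta2 delta h = hv_lin (\<lambda>(a, c). hv_lin (\<lambda>(p, q). hv_basis (p, q, c)) (delta a)) (hDelta delta h)"

text \<open>\<nu>(h) = R^(2) h_2 R'^(2) \<otimes> S(h_1) S(R^(1)) h_3 R'^(1).\<close>
definition hnu :: "('b \<Rightarrow> 'b \<Rightarrow> ('b \<Rightarrow>\<^sub>0 'k::field)) \<Rightarrow> ('b \<Rightarrow> ('b \<times> 'b \<Rightarrow>\<^sub>0 'k))
    \<Rightarrow> ('b \<Rightarrow> ('b \<Rightarrow>\<^sub>0 'k)) \<Rightarrow> ('b \<times> 'b \<Rightarrow>\<^sub>0 'k) \<Rightarrow> ('b \<Rightarrow>\<^sub>0 'k) \<Rightarrow> ('b \<times> 'b \<Rightarrow>\<^sub>0 'k)" where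
  "hnu mu delta S R h =
     hv_lin (\<lambda>(r1, r2). hv_lin (\<lambda>(s1, s2). hv_lin (\<lambda>(a, b, c).
        hv_tens (hmul mu (hmul mu (hv_basis r2) (hv_basis b)) (hv_basis s2))
                (hmul mu (hmul mu (hmul mu (hS S (hv_basis a)) (hS S (hv_basis r1))) (hv_basis c)) (hv_basis s1)))
        (hDelta2 delta h)) R) R"

definition semiquasitriangular ::
  "('b \<Rightarrow> 'b \<Rightarrow> ('b \<Rightarrow>\<^sub>0 'k::field)) \<Rightarrow> ('b \<Rightarrow>\<^sub>0 'k) \<Rightarrow> ('b \<Rightarrow> ('b \<times> 'b \<Rightarrow>\<^sub>0 'k))
    \<Rightarrow> ('b \<Rightarrow> 'k) \<Rightarrow> ('b \<Rightarrow> ('b \<Rightarrow>\<^sub>0 'k)) \<Rightarrow> ('b \<times> 'b \<Rightarrow>\<^sub>0 'k) \<Rightarrow> bool" where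
  "semiquasitriangular mu eta delta eps S R \<longleftrightarrow>
     hopf_algebra mu eta delta eps S \<and>
     \<comment> \<open>R invertible in H \<otimes> H\<close>
     (\<exists>R'. hmul2 mu R R' = hv_tens eta eta \<and> hmul2 mu R' R = hv_tens eta eta) \<and>
     \<comment> \<open>(1) R^(1)_1 \<otimes> R^(1)_2 \<otimes> R^(2) = R^(1) \<otimes> R'^(1) \<otimes> R^(2) R'^(2)\<close>
     hv_lin (\<lambda>(r1, r2). hv_lin (\<lambda>(p, q). hv_basis (p, q, r2)) (delta r1)) R
       = hv_lin (\<lambda>(r1, r2). hv_lin (\<lambda>(s1, s2).
            hv_tens (hv_basis r1) (hv_tens (hv_basis s1) (hmul mu (hv_basis r2) (hv_basis s2)))) R) R \<and>
     \<comment> \<open>(2) R^(1) \<otimes> R^(2)_1 \<otimes> R^(2)_2 = R^(1) R'^(1) \<otimes> R'^(2) \<otimes> R^(2)\<close>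
     hv_lin (\<lambda>(r1, r2). hv_tens (hv_basis r1) (delta r2)) R
       = hv_lin (\<lambda>(r1, r2). hv_lin (\<lambda>(s1, s2).
            hv_tens (hmul mu (hv_basis r1) (hv_basis s1)) (hv_tens (hv_basis s2) (hv_basis r2))) R) R \<and>
     \<comment> \<open>(3) R^(1) \<otimes> R^(2)_2 R'^(1) \<otimes> R^(2)_1 R'^(2) = R^(1) \<otimes> R'^(1) R^(2)_1 \<otimes> R'^(2) R^(2)_2\<close>
     hv_lin (\<lambda>(r1, r2). hv_lin (\<lambda>(s1, s2). hv_lin (\<lambda>(p, q).
            hv_tens (hv_basis r1) (hv_tens (hmul mu (hv_basis q) (hv_basis s1)) (hmul mu (hv_basis p) (hv_basis s2))))
          (delta r2)) R) R
       = hv_lin (\<lambda>(r1, r2). hv_lin (\<lambda>(s1, s2). hv_lin (\<lambda>(p, q).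
            hv_tens (hv_basis r1) (hv_tens (hmul mu (hv_basis s1) (hv_basis p)) (hmul mu (hv_basis s2) (hv_basis q))))
          (delta r2)) R) R \<and>
     \<comment> \<open>(4) R^(1)_2 R'^(1) \<otimes> R^(1)_1 R'^(2) \<otimes> R^(2) = R'^(1) R^(1)_1 \<otimes> R'^(2) R^(1)_2 \<otimes> R^(2)\<close>
     hv_lin (\<lambda>(r1, r2). hv_lin (\<lambda>(s1, s2). hv_lin (\<lambda>(p, q).
            hv_tens (hmul mu (hv_basis q) (hv_basis s1)) (hv_tens (hmul mu (hv_basis p) (hv_basis s2)) (hv_basis r2)))
          (delta r1)) R) R
       = hv_lin (\<lambda>(r1, r2). hv_lin (\<lambda>(s1, s2). hv_lin (\<lambda>(p, q).
            hv_tens (hmul mu (hv_basis s1) (hv_basis p)) (hv_tens (hmul mu (hv_basis s2) (hv_basis q)) (hv_basis r2)))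
          (delta r1)) R) R \<and>
     \<comment> \<open>(5) \<nu>(h) \<in> H \<otimes> Z(H)\<close>
     (\<forall>h. in_H_tensor_Z mu (hnu mu delta S R h)) \<and>
     \<comment> \<open>(6) \<nu>(h) = R^(1) h_2 R'^(1) \<otimes> S(R'^(2)) S(h_1) R^(2) h_3\<close>
     (\<forall>h. hnu mu delta S R h =
        hv_lin (\<lambda>(r1, r2). hv_lin (\<lambda>(s1, s2). hv_lin (\<lambda>(a, b, c).
          hv_tens (hmul mu (hmul mu (hv_basis r1) (hv_basis b)) (hv_basis s1))
                  (hmul mu (hmul mu (hmul mu (hS S (hv_basis s2)) (hS S (hv_basis a))) (hv_basis r2)) (hv_basis c)))
          (hDelta2 delta h)) R) R)"

definition drinfeld_u :: "('b \<Rightarrow> 'b \<Rightarrow> ('b \<Rightarrow>\<^sub>0 'k::field)) \<Rightarrow> ('b \<Rightarrow> ('b \<Rightarrow>\<^sub>0 'k))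
    \<Rightarrow> ('b \<times> 'b \<Rightarrow>\<^sub>0 'k) \<Rightarrow> ('b \<Rightarrow>\<^sub>0 'k)" where
  "drinfeld_u mu S R = hv_lin (\<lambda>(r1, r2). hmul mu (hS S (hv_basis r2)) (hv_basis r1)) R"

end

theory Submission
  imports Defs
begin

lemma lookup_hv_smul[simp]: "Poly_Mapping.lookup (hv_smul c x) a = c * Poly_Mapping.lookup x a"
  unfolding hv_smul_def by (simp add: Poly_Mapping.map.rep_eq when_def)

lemma hv_smul_add_vec: "hv_smul c (x + y) = hv_smul c x + hv_smul c y"
  by (rule poly_mapping_eqI) (simp add: lookup_add algebra_simps)
lemma hv_smul_add_sc: "hv_smul (c + d) x = hv_smul c x + hv_smul d x"
  by (rule poly_mapping_eqI) (simp add: lookup_add algebra_simps)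
lemma hv_smul_mult: "hv_smul c (hv_smul d x) = hv_smul (c * d) x"
  by (rule poly_mapping_eqI) (simp add: algebra_simps)
lemma hv_smul_0[simp]: "hv_smul 0 x = 0"
  by (rule poly_mapping_eqI) simp
lemma hv_smul_zero[simp]: "hv_smul c 0 = 0"
  by (rule poly_mapping_eqI) simp
lemma hv_smul_1[simp]: "hv_smul 1 x = x"
  by (rule poly_mapping_eqI) simp
lemma hv_smul_sum: "hv_smul c (sum f A) = (\<Sum>a\<in>A. hv_smul c (f a))"
  by (rule poly_mapping_eqI) (simp add: lookup_sum sum_distrib_left)
lemma hv_smul_sum_sc: "hv_smul (sum f A) x = (\<Sum>a\<in>A. hv_smul (f a) x)"
  by (rule poly_mapping_eqI) (simp add: lookup_sum sum_distrib_right)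
lemma keys_hv_smul: "Poly_Mapping.keys (hv_smul c x) \<subseteq> Poly_Mapping.keys x"
  by (auto simp: in_keys_iff)

lemma hv_lin_superset:
  assumes "finite A" "Poly_Mapping.keys x \<subseteq> A"
  shows "hv_lin f x = (\<Sum>a\<in>A. hv_smul (Poly_Mapping.lookup x a) (f a))"
  unfolding hv_lin_def
  by (rule sum.mono_neutral_left) (use assms in \<open>auto simp: in_keys_iff\<close>)

lemma hv_lin_add: "hv_lin f (x + y) = hv_lin f x + hv_lin f y"
proof -
  have fin: "finite (Poly_Mapping.keys x \<union> Poly_Mapping.keys y)" by simp
  have "Poly_Mapping.keys (x + y) \<subseteq> Poly_Mapping.keys x \<union> Poly_Mapping.keys y" by (rule keys_add)
  then show ?thesis
    by (simp add: hv_lin_superset[OF fin] lookup_add hv_smul_add_sc sum.distrib)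
qed

lemma hv_lin_smul: "hv_lin f (hv_smul c x) = hv_smul c (hv_lin f x)"
  using keys_hv_smul[of c x]
  by (simp add: hv_lin_superset[of "Poly_Mapping.keys x"] hv_smul_sum hv_smul_mult)

lemma hv_lin_zero[simp]: "hv_lin f 0 = 0"
  by (simp add: hv_lin_def)

lemma hv_lin_basis[simp]: "hv_lin f (hv_basis a) = f a"
  by (simp add: hv_lin_def hv_basis_def)

lemma hv_lin_basis_id: "hv_lin hv_basis x = x"
proof (rule poly_mapping_eqI)
  fix k
  show "Poly_Mapping.lookup (hv_lin hv_basis x) k = Poly_Mapping.lookup x k"
    unfolding hv_lin_def hv_basis_def
    by (simp add: lookup_sum lookup_single when_def in_keys_iff if_distrib[of "(*) _"] sum.delta cong: if_cong)
qed


definition lin :: "(('a \<Rightarrow>\<^sub>0 'k::field) \<Rightarrow> ('c \<Rightarrow>\<^sub>0 'k)) \<Rightarrow> bool" where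
  "lin L \<longleftrightarrow> (\<forall>x y. L (x + y) = L x + L y) \<and> (\<forall>c x. L (hv_smul c x) = hv_smul c (L x))"

lemma linD: "lin L \<Longrightarrow> L (x + y) = L x + L y" "lin L \<Longrightarrow> L (hv_smul c x) = hv_smul c (L x)"
  by (auto simp: lin_def)

lemma lin_zero: "lin L \<Longrightarrow> L 0 = 0"
  by (metis hv_smul_0 linD(2))

lemma lin_sum: "lin L \<Longrightarrow> L (sum f A) = (\<Sum>a\<in>A. L (f a))"
  by (induction A rule: infinite_finite_induct) (auto simp: lin_zero linD)

lemma lin_push: "lin L \<Longrightarrow> L (hv_lin f x) = hv_lin (\<lambda>a. L (f a)) x"
  by (simp add: hv_lin_def lin_sum linD)

lemma lin_rep: "lin L \<Longrightarrow> hv_lin (\<lambda>a. L (hv_basis a)) x = L x"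
  using lin_push[of L hv_basis x] by (simp add: hv_lin_basis_id)

lemma lin_ext: "lin F \<Longrightarrow> lin G \<Longrightarrow> (\<And>a. F (hv_basis a) = G (hv_basis a)) \<Longrightarrow> F x = G x"
  using lin_rep[of F x] lin_rep[of G x] by simp

lemma lin_hv_lin[intro]: "lin (hv_lin f)"
  by (simp add: lin_def hv_lin_add hv_lin_smul)

lemma hv_lin_comp: "hv_lin g (hv_lin f x) = hv_lin (\<lambda>a. hv_lin g (f a)) x"
  by (rule lin_push[OF lin_hv_lin])

lemma hv_lin_fadd: "hv_lin (\<lambda>a. f a + g a) x = hv_lin f x + hv_lin g x"
  by (simp add: hv_lin_def hv_smul_add_vec sum.distrib)

lemma hv_lin_fsmul: "hv_lin (\<lambda>a. hv_smul c (f a)) x = hv_smul c (hv_lin f x)"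
  by (simp add: hv_lin_def hv_smul_sum hv_smul_mult mult.commute)

lemma hv_lin_f0[simp]: "hv_lin (\<lambda>a. 0) x = 0"
  by (simp add: hv_lin_def)

lemma hv_lin_cong: assumes "\<And>a. f a = g a" shows "hv_lin f x = hv_lin g x"
proof -
  have "f = g" using assms by (rule ext)
  then show ?thesis by simp
qed

lemma hv_lin_swap:
  "hv_lin (\<lambda>a. hv_lin (\<lambda>b. F a b) y) x = hv_lin (\<lambda>b. hv_lin (\<lambda>a. F a b) x) y"
  unfolding hv_lin_def
  apply (simp add: hv_smul_sum hv_smul_mult mult.commute)
  by (rule sum.swap)

lemma lin_fun: "(\<And>a. lin (G a)) \<Longrightarrow> lin (\<lambda>y. hv_lin (\<lambda>a. G a y) x)"
  by (simp add: lin_def hv_lin_fadd hv_lin_fsmul)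

lemma lin_id[intro]: "lin (\<lambda>x. x)"
  by (simp add: lin_def)
lemma lin_hv_lin_c: "lin f \<Longrightarrow> lin (\<lambda>x. hv_lin g (f x))"
  by (simp add: lin_def hv_lin_add hv_lin_smul)
lemma lin_smul_c: "lin f \<Longrightarrow> lin (\<lambda>x. hv_smul c (f x))"
  by (simp add: lin_def hv_smul_add_vec hv_smul_mult mult.commute)
lemma lin_add_c: "lin f \<Longrightarrow> lin g \<Longrightarrow> lin (\<lambda>x. f x + g x)"
  by (simp add: lin_def hv_smul_add_vec algebra_simps)
lemma lin_fun_c: "(\<And>a. lin (\<lambda>x. G a x)) \<Longrightarrow> lin (\<lambda>x. hv_lin (\<lambda>a. G a x) y)"
  using lin_fun[of G y] by simp
lemma lin_case_prod: "(\<And>a b. lin (\<lambda>x. G a b x)) \<Longrightarrow> lin (\<lambda>x. case p of (a, b) \<Rightarrow> G a b x)"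
  by (cases p) simp

lemma hv_lin_tens: "hv_lin F (hv_tens x y) = hv_lin (\<lambda>a. hv_lin (\<lambda>c. F (a, c)) y) x"
  unfolding hv_tens_def by (simp add: hv_lin_comp)

lemma hv_tens_basis[simp]: "hv_tens (hv_basis a) (hv_basis c) = hv_basis (a, c)"
  unfolding hv_tens_def by simp

lemma lin_tens_l_c: "lin f \<Longrightarrow> lin (\<lambda>x. hv_tens (f x) y)"
  unfolding hv_tens_def by (rule lin_hv_lin_c)
lemma lin_tens_r_c: "lin f \<Longrightarrow> lin (\<lambda>x. hv_tens y (f x))"
  unfolding hv_tens_def by (intro lin_fun_c lin_hv_lin_c)

lemma lin_mul_l_c: "lin f \<Longrightarrow> lin (\<lambda>x. hmul mu (f x) y)"
  unfolding hmul_def by (rule lin_hv_lin_c)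
lemma lin_mul_r_c: "lin f \<Longrightarrow> lin (\<lambda>x. hmul mu y (f x))"
  unfolding hmul_def by (intro lin_fun_c lin_hv_lin_c)
lemma lin_hS_c: "lin f \<Longrightarrow> lin (\<lambda>x. hS S (f x))"
  unfolding hS_def by (rule lin_hv_lin_c)
lemma lin_mul2_l_c: "lin f \<Longrightarrow> lin (\<lambda>x. hmul2 mu (f x) y)"
  unfolding hmul2_def by (rule lin_hv_lin_c)
lemma lin_mul2_r_c: "lin f \<Longrightarrow> lin (\<lambda>x. hmul2 mu y (f x))"
  unfolding hmul2_def by (intro lin_fun_c lin_case_prod lin_hv_lin_c)

lemma lin_comp_c: "lin L \<Longrightarrow> lin f \<Longrightarrow> lin (\<lambda>x. L (f x))"
  by (simp add: lin_def)

lemmas lin_intros = lin_id lin_hv_lin_c lin_smul_c lin_add_c lin_fun_c lin_case_prod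
  lin_tens_l_c lin_tens_r_c lin_mul_l_c lin_mul_r_c lin_hS_c lin_mul2_l_c lin_mul2_r_c

lemma "lin (\<lambda>x. hv_lin (\<lambda>(a,b). hmul mu (hv_basis a) (hv_lin g (hmul mu x (hv_basis b)))) y)"
  by (rule lin_intros)+

lemma "lin (\<lambda>x. hmul mu (hS S (hv_basis a)) (hv_lin (\<lambda>(a,b). hv_tens (hv_lin g (hmul mu x (hv_basis b))) (hv_basis a)) y))"
  by (rule lin_intros)+

lemma hmul_basis: "hmul mu (hv_basis a) (hv_basis b) = mu a b"
  unfolding hmul_def by simp
lemma hS_basis: "hS S (hv_basis a) = S a"
  unfolding hS_def by simp

lemma hv_fun_add: "hv_fun f (x + y) = hv_fun f x + hv_fun f y"
proof -
  have fin: "finite (Poly_Mapping.keys x \<union> Poly_Mapping.keys y)" by simp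
  have k: "Poly_Mapping.keys (x + y) \<subseteq> Poly_Mapping.keys x \<union> Poly_Mapping.keys y" by (rule keys_add)
  have g: "\<And>z. Poly_Mapping.keys z \<subseteq> Poly_Mapping.keys x \<union> Poly_Mapping.keys y \<Longrightarrow>
     hv_fun f z = (\<Sum>a\<in>Poly_Mapping.keys x \<union> Poly_Mapping.keys y. Poly_Mapping.lookup z a * f a)"
    unfolding hv_fun_def by (rule sum.mono_neutral_left) (auto simp: in_keys_iff)
  show ?thesis using k by (simp add: g lookup_add algebra_simps sum.distrib)
qed

lemma hv_fun_smul: "hv_fun f (hv_smul c x) = c * hv_fun f x"
proof -
  have g: "hv_fun f (hv_smul c x) = (\<Sum>a\<in>Poly_Mapping.keys x. Poly_Mapping.lookup (hv_smul c x) a * f a)"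
    unfolding hv_fun_def by (rule sum.mono_neutral_left) (auto simp: in_keys_iff)
  also have "\<dots> = c * hv_fun f x" by (simp add: hv_fun_def sum_distrib_left algebra_simps)
  finally show ?thesis .
qed

lemma hv_fun_basis[simp]: "hv_fun f (hv_basis a) = f a"
  by (simp add: hv_fun_def hv_basis_def)

lemma hv_fun_zero[simp]: "hv_fun f 0 = 0"
  by (simp add: hv_fun_def)

lemma hv_fun_sum: "hv_fun f (sum g A) = (\<Sum>a\<in>A. hv_fun f (g a))"
  by (induction A rule: infinite_finite_induct) (auto simp: hv_fun_add)

lemma hv_fun_lin: "hv_fun f (hv_lin g x) = hv_fun (\<lambda>a. hv_fun f (g a)) x"
  unfolding hv_lin_def by (simp only: hv_fun_sum hv_fun_smul) (simp add: hv_fun_def)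

lemma hv_smul_fun: "hv_smul (hv_fun f x) v = hv_lin (\<lambda>a. hv_smul (f a) v) x"
  by (simp add: hv_lin_def hv_fun_def hv_smul_sum_sc hv_smul_mult)

locale hopf =
  fixes mu :: "'b \<Rightarrow> 'b \<Rightarrow> ('b \<Rightarrow>\<^sub>0 'k::field)"
    and eta :: "'b \<Rightarrow>\<^sub>0 'k"
    and delta :: "'b \<Rightarrow> ('b \<times> 'b \<Rightarrow>\<^sub>0 'k)"
    and eps :: "'b \<Rightarrow> 'k"
    and S :: "'b \<Rightarrow> ('b \<Rightarrow>\<^sub>0 'k)"
  assumes hopf: "hopf_algebra mu eta delta eps S"
begin

abbreviation m where "m \<equiv> hmul mu"
abbreviation Sv where "Sv \<equiv> hS S"
abbreviation e :: "'a \<Rightarrow> ('a \<Rightarrow>\<^sub>0 'k)" where "e \<equiv> hv_basis"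

lemma assoc: "m (m x y) z = m x (m y z)"
  using hopf unfolding hopf_algebra_def by blast
lemma unit_l[simp]: "m eta x = x"
  using hopf unfolding hopf_algebra_def by blast
lemma unit_r[simp]: "m x eta = x"
  using hopf unfolding hopf_algebra_def by blast

lemma D_basis[simp]: "hDelta delta (e b) = delta b"
  by (simp add: hDelta_def)

lemma coassoc_ax: "hv_lin (\<lambda>(a, c). hv_lin (\<lambda>(p, q). hv_basis (p, q, c)) (delta a)) (hDelta delta x)
        = hv_lin (\<lambda>(a, c). hv_tens (hv_basis a) (delta c)) (hDelta delta x)"
  using hopf unfolding hopf_algebra_def by blast

lemma coassoc_gen:
  "hv_lin (\<lambda>(a, c). hv_lin (\<lambda>(p, q). F p q c) (delta a)) (hDelta delta x) =
   hv_lin (\<lambda>(a, c). hv_lin (\<lambda>(p, q). F a p q) (delta c)) (hDelta delta x)"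
proof -
  have "hv_lin (\<lambda>(p, q, c). F p q c) (hv_lin (\<lambda>(a, c). hv_lin (\<lambda>(p, q). hv_basis (p, q, c)) (delta a)) (hDelta delta x))
     = hv_lin (\<lambda>(p, q, c). F p q c) (hv_lin (\<lambda>(a, c). hv_tens (hv_basis a) (delta c)) (hDelta delta x))"
    by (simp only: coassoc_ax)
  then show ?thesis
    by (simp add: hv_lin_comp prod.case_distrib hv_lin_tens split_def)
qed

lemma coassoc:
  "hv_lin (\<lambda>(a, c). hv_lin (\<lambda>(p, q). F p q c) (delta a)) (delta b) =
   hv_lin (\<lambda>(a, c). hv_lin (\<lambda>(p, q). F a p q) (delta c)) (delta b)"
  using coassoc_gen[of F "e b"] by simp

lemma counit_ax: "hv_lin (\<lambda>(a, c). hv_smul (eps a) (hv_basis c)) (hDelta delta x) = x"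
     "hv_lin (\<lambda>(a, c). hv_smul (eps c) (hv_basis a)) (hDelta delta x) = x"
  using hopf unfolding hopf_algebra_def by blast+

lemma counit_l_gen: "lin L \<Longrightarrow> hv_lin (\<lambda>(a, c). hv_smul (eps a) (L (e c))) (hDelta delta x) = L x"
  using lin_push[of L "\<lambda>(a, c). hv_smul (eps a) (hv_basis c)" "hDelta delta x"]
  by (simp add: counit_ax prod.case_distrib linD)

lemma counit_r_gen: "lin L \<Longrightarrow> hv_lin (\<lambda>(a, c). hv_smul (eps c) (L (e a))) (hDelta delta x) = L x"
  using lin_push[of L "\<lambda>(a, c). hv_smul (eps c) (hv_basis a)" "hDelta delta x"]
  by (simp add: counit_ax prod.case_distrib linD)

lemma counit_l: "hv_lin (\<lambda>(a, c). hv_smul (eps a) (G c)) (delta b) = G b"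
  using counit_l_gen[of "hv_lin G" "e b"] by (simp add: lin_hv_lin)

lemma counit_r: "hv_lin (\<lambda>(a, c). hv_smul (eps c) (G a)) (delta b) = G b"
  using counit_r_gen[of "hv_lin G" "e b"] by (simp add: lin_hv_lin)

lemma Dmult: "hDelta delta (m x y) = hmul2 mu (hDelta delta x) (hDelta delta y)"
  using hopf unfolding hopf_algebra_def by blast
lemma Deta: "hDelta delta eta = hv_tens eta eta"
  using hopf unfolding hopf_algebra_def by blast
lemma eps_mult: "hv_fun eps (m x y) = hv_fun eps x * hv_fun eps y"
  using hopf unfolding hopf_algebra_def by blast
lemma eps_eta: "hv_fun eps eta = 1"
  using hopf unfolding hopf_algebra_def by blast
lemma antipode_ax:
  "hv_lin (\<lambda>(a, c). m (Sv (e a)) (e c)) (hDelta delta x) = hv_smul (hv_fun eps x) eta"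
  "hv_lin (\<lambda>(a, c). m (e a) (Sv (e c))) (hDelta delta x) = hv_smul (hv_fun eps x) eta"
  using hopf unfolding hopf_algebra_def by blast+

lemma antipode_l_gen: "lin L \<Longrightarrow> hv_lin (\<lambda>(a, c). L (m (Sv (e a)) (e c))) (hDelta delta x) = hv_smul (hv_fun eps x) (L eta)"
  using lin_push[of L "\<lambda>(a, c). m (Sv (e a)) (e c)" "hDelta delta x"]
  by (simp add: antipode_ax prod.case_distrib linD)
lemma antipode_r_gen: "lin L \<Longrightarrow> hv_lin (\<lambda>(a, c). L (m (e a) (Sv (e c)))) (hDelta delta x) = hv_smul (hv_fun eps x) (L eta)"
  using lin_push[of L "\<lambda>(a, c). m (e a) (Sv (e c))" "hDelta delta x"]
  by (simp add: antipode_ax prod.case_distrib linD)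

lemma antipode_l: "lin L \<Longrightarrow> hv_lin (\<lambda>(a, c). L (m (Sv (e a)) (e c))) (delta b) = hv_smul (eps b) (L eta)"
  using antipode_l_gen[of L "e b"] by simp
lemma antipode_r: "lin L \<Longrightarrow> hv_lin (\<lambda>(a, c). L (m (e a) (Sv (e c)))) (delta b) = hv_smul (eps b) (L eta)"
  using antipode_r_gen[of L "e b"] by simp

end

lemma bilin_push:
  assumes "\<And>y. lin (\<lambda>x. \<Phi> x y)" "\<And>x. lin (\<lambda>y. \<Phi> x y)"
  shows "\<Phi> (hv_lin f x) (hv_lin g y) = hv_lin (\<lambda>a. hv_lin (\<lambda>b. \<Phi> (f a) (g b)) y) x"
proof -
  have "\<Phi> (hv_lin f x) (hv_lin g y) = hv_lin (\<lambda>a. \<Phi> (f a) (hv_lin g y)) x"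
    by (rule lin_push[OF assms(1)])
  also have "\<dots> = hv_lin (\<lambda>a. hv_lin (\<lambda>b. \<Phi> (f a) (g b)) y) x"
    by (simp add: lin_push[OF assms(2)])
  finally show ?thesis .
qed

lemma bilin_tens:
  assumes "\<And>y. lin (\<lambda>x. \<Phi> x y)" "\<And>x. lin (\<lambda>y. \<Phi> x y)"
  shows "hv_lin (\<lambda>(a, b). \<Phi> (hv_basis a) (hv_basis b)) (hv_tens x y) = \<Phi> x y"
proof -
  have "\<Phi> x y = \<Phi> (hv_lin hv_basis x) (hv_lin hv_basis y)" by (simp add: hv_lin_basis_id)
  also have "\<dots> = hv_lin (\<lambda>a. hv_lin (\<lambda>b. \<Phi> (hv_basis a) (hv_basis b)) y) x"
    by (rule bilin_push[OF assms])
  finally show ?thesis by (simp add: hv_lin_tens)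
qed

lemma hv_lin_cong2: "(\<And>a b. f a b = g a b) \<Longrightarrow> hv_lin (\<lambda>(a, b). f a b) x = hv_lin (\<lambda>(a, b). g a b) x"
  by simp

lemma swap2: "hv_lin (\<lambda>(a1, a2). hv_lin (\<lambda>(b1, b2). F a1 a2 b1 b2) Y) X =
   hv_lin (\<lambda>(b1, b2). hv_lin (\<lambda>(a1, a2). F a1 a2 b1 b2) X) Y"
  using hv_lin_swap[of "\<lambda>a b. F (fst a) (snd a) (fst b) (snd b)" Y X]
  by (simp add: split_def)

lemma push2: "lin L \<Longrightarrow> hv_lin (\<lambda>(a, b). L (F a b)) X = L (hv_lin (\<lambda>(a, b). F a b) X)"
  by (simp add: lin_push prod.case_distrib)

context hopf
begin

lemma m_basis: "mu a b = m (e a) (e b)"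
  by (simp add: hmul_basis)

lemma Dmult_basis:
  assumes "\<And>y. lin (\<lambda>x. \<Phi> x y)" "\<And>x. lin (\<lambda>y. \<Phi> x y)"
  shows "hv_lin (\<lambda>(p, q). \<Phi> (e p) (e q)) (hDelta delta (m (e a) (e b))) =
    hv_lin (\<lambda>(a1, a2). hv_lin (\<lambda>(b1, b2). \<Phi> (m (e a1) (e b1)) (m (e a2) (e b2))) (delta b)) (delta a)"
  unfolding Dmult hmul2_def
  by (simp add: hv_lin_comp prod.case_distrib bilin_tens[OF assms] m_basis)

lemma eps_m_basis: "hv_fun eps (m (e a) (e b)) = eps a * eps b"
  by (simp add: eps_mult)

lemma antipode_prod_l:
  assumes "lin L"
  shows "hv_lin (\<lambda>(a1, a2). hv_lin (\<lambda>(b1, b2). L (m (Sv (m (e a1) (e b1))) (m (e a2) (e b2)))) (delta y)) (delta x)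
     = hv_smul (eps x * eps y) (L eta)"
proof -
  have "hv_lin (\<lambda>(p, q). L (m (Sv (e p)) (e q))) (hDelta delta (m (e x) (e y))) =
     hv_lin (\<lambda>(a1, a2). hv_lin (\<lambda>(b1, b2). L (m (Sv (m (e a1) (e b1))) (m (e a2) (e b2)))) (delta y)) (delta x)"
    by (rule Dmult_basis[where \<Phi>="\<lambda>u v. L (m (Sv u) v)"]) (rule lin_comp_c[OF assms] lin_intros)+
  then have "hv_lin (\<lambda>(a1, a2). hv_lin (\<lambda>(b1, b2). L (m (Sv (m (e a1) (e b1))) (m (e a2) (e b2)))) (delta y)) (delta x)
      = hv_lin (\<lambda>(p, q). L (m (Sv (e p)) (e q))) (hDelta delta (m (e x) (e y)))" by simp
  also have "\<dots> = hv_smul (eps x * eps y) (L eta)"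
    by (simp add: antipode_l_gen[OF assms] eps_m_basis)
  finally show ?thesis .
qed

lemma counit_l_smul: "hv_lin (\<lambda>(y, c). hv_smul (k * eps y) (G c)) (delta b) = hv_smul k (G b)"
proof -
  have "hv_lin (\<lambda>(y, c). hv_smul (k * eps y) (G c)) (delta b) =
      hv_lin (\<lambda>(y, c). hv_smul k (hv_smul (eps y) (G c))) (delta b)"
    by (simp add: hv_smul_mult)
  also have "\<dots> = hv_smul k (hv_lin (\<lambda>(y, c). hv_smul (eps y) (G c)) (delta b))"
    by (rule push2) (rule lin_intros)+
  also have "\<dots> = hv_smul k (G b)" by (simp only: counit_l)
  finally show ?thesis .
qed

lemma counit_l_smul': "hv_lin (\<lambda>(y, c). hv_smul (eps y * k) (G c)) (delta b) = hv_smul k (G b)"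
  using counit_l_smul[of k G b] by (simp add: mult.commute)

lemma counit_r_smul: "hv_lin (\<lambda>(c, y). hv_smul (k * eps y) (G c)) (delta b) = hv_smul k (G b)"
proof -
  have "hv_lin (\<lambda>(c, y). hv_smul (k * eps y) (G c)) (delta b) =
      hv_lin (\<lambda>(c, y). hv_smul k (hv_smul (eps y) (G c))) (delta b)"
    by (simp add: hv_smul_mult)
  also have "\<dots> = hv_smul k (hv_lin (\<lambda>(c, y). hv_smul (eps y) (G c)) (delta b))"
    by (rule push2) (rule lin_intros)+
  also have "\<dots> = hv_smul k (G b)" by (simp only: counit_r)
  finally show ?thesis .
qed

lemma counit_r_smul': "hv_lin (\<lambda>(c, y). hv_smul (eps y * k) (G c)) (delta b) = hv_smul k (G b)"
  using counit_r_smul[of k G b] by (simp add: mult.commute)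

lemma S_anti_basis: "Sv (m (e a) (e b)) = m (Sv (e b)) (Sv (e a))"
proof -
  define \<Phi> where "\<Phi> a1 a2 a3 b1 b2 b3 = m (m (m (Sv (m (e a1) (e b1))) (m (e a2) (e b2))) (Sv (e b3))) (Sv (e a3))" for a1 a2 a3 b1 b2 b3
  define T1 where "T1 = hv_lin (\<lambda>(x, a3). hv_lin (\<lambda>(a1, a2). hv_lin (\<lambda>(y, b3). hv_lin (\<lambda>(b1, b2).
       \<Phi> a1 a2 a3 b1 b2 b3) (delta y)) (delta b)) (delta x)) (delta a)"
  define T2 where "T2 = hv_lin (\<lambda>(a1, x). hv_lin (\<lambda>(a2, a3). hv_lin (\<lambda>(b1, y). hv_lin (\<lambda>(b2, b3).
       \<Phi> a1 a2 a3 b1 b2 b3) (delta y)) (delta b)) (delta x)) (delta a)"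
  have "T1 = T2"
    unfolding T1_def T2_def by (simp only: coassoc)
  have s1: "hv_lin (\<lambda>(a1, a2). hv_lin (\<lambda>(b1, b2). \<Phi> a1 a2 a3 b1 b2 b3) (delta y)) (delta x)
     = hv_smul (eps x * eps y) (m (Sv (e b3)) (Sv (e a3)))" for x y a3 b3
    using antipode_prod_l[where L="\<lambda>z. m (m z (Sv (e b3))) (Sv (e a3))" and x=x and y=y]
    by (simp add: \<Phi>_def lin_intros)
  have "T1 = m (Sv (e b)) (Sv (e a))"
    unfolding T1_def
    apply (simp only: swap2[of _ "delta b"])
    apply (simp only: s1 counit_l_smul')
    apply (simp only: counit_l)
    done
  have c2: "hv_lin (\<lambda>(b2, b3). m (e b2) (Sv (e b3))) (delta y) = hv_smul (eps y) eta" for y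
    using antipode_r[where L="\<lambda>z. z" and b=y] by (simp add: lin_intros)
  have s2: "hv_lin (\<lambda>(b2, b3). \<Phi> a1 a2 a3 b1 b2 b3) (delta y) =
     hv_smul (eps y) (m (m (Sv (m (e a1) (e b1))) (e a2)) (Sv (e a3)))" for a1 a2 a3 b1 y
  proof -
    have "hv_lin (\<lambda>(b2, b3). \<Phi> a1 a2 a3 b1 b2 b3) (delta y) =
       hv_lin (\<lambda>(b2, b3). (\<lambda>z. m (m (Sv (m (e a1) (e b1))) (m (e a2) z)) (Sv (e a3))) (m (e b2) (Sv (e b3)))) (delta y)"
      unfolding \<Phi>_def by (simp add: assoc)
    also have "\<dots> = hv_smul (eps y) (m (m (Sv (m (e a1) (e b1))) (m (e a2) eta)) (Sv (e a3)))"
      by (rule antipode_r) (rule lin_intros)+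
    finally show ?thesis by simp
  qed
  have s3: "hv_lin (\<lambda>(a2, a3). hv_lin (\<lambda>(b1, y). hv_smul (eps y) (m (m (Sv (m (e a1) (e b1))) (e a2)) (Sv (e a3)))) (delta b)) (delta x)
     = hv_lin (\<lambda>(b1, y). hv_smul (eps y * eps x) (Sv (m (e a1) (e b1)))) (delta b)" for a1 x
  proof -
    have "hv_lin (\<lambda>(a2, a3). hv_lin (\<lambda>(b1, y). hv_smul (eps y) (m (m (Sv (m (e a1) (e b1))) (e a2)) (Sv (e a3)))) (delta b)) (delta x)
      = hv_lin (\<lambda>(b1, y). hv_lin (\<lambda>(a2, a3). hv_smul (eps y) (m (m (Sv (m (e a1) (e b1))) (e a2)) (Sv (e a3)))) (delta x)) (delta b)"
      by (rule swap2)
    also have "\<dots> = hv_lin (\<lambda>(b1, y). hv_smul (eps y * eps x) (Sv (m (e a1) (e b1)))) (delta b)"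
    proof (rule hv_lin_cong2)
      fix b1 y
      have "hv_lin (\<lambda>(a2, a3). hv_smul (eps y) (m (m (Sv (m (e a1) (e b1))) (e a2)) (Sv (e a3)))) (delta x)
         = hv_lin (\<lambda>(a2, a3). (\<lambda>z. hv_smul (eps y) (m (Sv (m (e a1) (e b1))) z)) (m (e a2) (Sv (e a3)))) (delta x)"
        by (simp add: assoc)
      also have "\<dots> = hv_smul (eps x) (hv_smul (eps y) (m (Sv (m (e a1) (e b1))) eta))"
        by (rule antipode_r) (rule lin_intros)+
      finally show "hv_lin (\<lambda>(a2, a3). hv_smul (eps y) (m (m (Sv (m (e a1) (e b1))) (e a2)) (Sv (e a3)))) (delta x)
         = hv_smul (eps y * eps x) (Sv (m (e a1) (e b1)))" by (simp add: hv_smul_mult mult.commute)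
    qed
    finally show ?thesis .
  qed
  have "T2 = Sv (m (e a) (e b))"
    unfolding T2_def
    apply (simp only: s2 s3 counit_r_smul')
    apply (simp only: counit_r)
    done
  show ?thesis using \<open>T1 = T2\<close> \<open>T2 = Sv (m (e a) (e b))\<close> \<open>T1 = m (Sv (e b)) (Sv (e a))\<close> by simp
qed

lemma S_anti: "Sv (m x y) = m (Sv y) (Sv x)"
proof -
  have *: "Sv (m x (e b)) = m (Sv (e b)) (Sv x)" for b
    by (rule lin_ext[where F="\<lambda>x. Sv (m x (e b))" and G="\<lambda>x. m (Sv (e b)) (Sv x)"])
      ((rule lin_intros)+, rule S_anti_basis)
  show ?thesis
    by (rule lin_ext[where F="\<lambda>y. Sv (m x y)" and G="\<lambda>y. m (Sv y) (Sv x)"])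
      ((rule lin_intros)+, rule *)
qed

lemma S_eta: "Sv eta = eta"
proof -
  have "hv_lin (\<lambda>(a, c). m (Sv (e a)) (e c)) (hDelta delta eta) = hv_smul (hv_fun eps eta) eta"
    by (rule antipode_ax)
  moreover have "hv_lin (\<lambda>(a, c). m (Sv (e a)) (e c)) (hv_tens eta eta) = m (Sv eta) eta"
    by (rule bilin_tens[where \<Phi>="\<lambda>u v. m (Sv u) v"]) (rule lin_intros)+
  ultimately show ?thesis by (simp add: Deta eps_eta)
qed

end

context hopf
begin

lemma hmul2_tens: "hmul2 mu (hv_tens x y) (hv_tens z w) = hv_tens (m x z) (m y w)"
proof -
  have h1: "hmul2 mu (hv_tens (e a) (e b)) (hv_tens (e c) (e d)) = hv_tens (m (e a) (e c)) (m (e b) (e d))" for a b c d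
    by (simp add: hmul2_def m_basis)
  have h2: "hmul2 mu (hv_tens (e a) (e b)) (hv_tens (e c) w) = hv_tens (m (e a) (e c)) (m (e b) w)" for a b c
    by (rule lin_ext[where F="\<lambda>w. hmul2 mu (hv_tens (e a) (e b)) (hv_tens (e c) w)" and G="\<lambda>w. hv_tens (m (e a) (e c)) (m (e b) w)"])
      ((rule lin_intros)+, rule h1)
  have h3: "hmul2 mu (hv_tens (e a) (e b)) (hv_tens z w) = hv_tens (m (e a) z) (m (e b) w)" for a b
    by (rule lin_ext[where F="\<lambda>z. hmul2 mu (hv_tens (e a) (e b)) (hv_tens z w)" and G="\<lambda>z. hv_tens (m (e a) z) (m (e b) w)"])
      ((rule lin_intros)+, rule h2)
  have h4: "hmul2 mu (hv_tens (e a) y) (hv_tens z w) = hv_tens (m (e a) z) (m y w)" for a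
    by (rule lin_ext[where F="\<lambda>y. hmul2 mu (hv_tens (e a) y) (hv_tens z w)" and G="\<lambda>y. hv_tens (m (e a) z) (m y w)"])
      ((rule lin_intros)+, rule h3)
  show ?thesis
    by (rule lin_ext[where F="\<lambda>x. hmul2 mu (hv_tens x y) (hv_tens z w)" and G="\<lambda>x. hv_tens (m x z) (m y w)"])
      ((rule lin_intros)+, rule h4)
qed

lemma basis_pair: "e p = hv_tens (e (fst p)) (e (snd p))"
  by (cases p) simp

lemma hmul2_assoc: "hmul2 mu (hmul2 mu X Y) Z = hmul2 mu X (hmul2 mu Y Z)"
proof -
  have h1: "hmul2 mu (hmul2 mu (e p) (e q)) (e r) = hmul2 mu (e p) (hmul2 mu (e q) (e r))" for p q r
    by (simp only: basis_pair[of p] basis_pair[of q] basis_pair[of r] hmul2_tens assoc)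
  have h2: "hmul2 mu (hmul2 mu (e p) (e q)) Z = hmul2 mu (e p) (hmul2 mu (e q) Z)" for p q
    by (rule lin_ext[where F="\<lambda>Z. hmul2 mu (hmul2 mu (e p) (e q)) Z" and G="\<lambda>Z. hmul2 mu (e p) (hmul2 mu (e q) Z)"])
      ((rule lin_intros)+, rule h1)
  have h3: "hmul2 mu (hmul2 mu (e p) Y) Z = hmul2 mu (e p) (hmul2 mu Y Z)" for p
    by (rule lin_ext[where F="\<lambda>Y. hmul2 mu (hmul2 mu (e p) Y) Z" and G="\<lambda>Y. hmul2 mu (e p) (hmul2 mu Y Z)"])
      ((rule lin_intros)+, rule h2)
  show ?thesis
    by (rule lin_ext[where F="\<lambda>X. hmul2 mu (hmul2 mu X Y) Z" and G="\<lambda>X. hmul2 mu X (hmul2 mu Y Z)"])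
      ((rule lin_intros)+, rule h3)
qed

lemma hmul2_unit_l: "hmul2 mu (hv_tens eta eta) X = X"
proof -
  have *: "hmul2 mu (hv_tens eta eta) (e p) = e p" for p
    by (simp only: basis_pair[of p] hmul2_tens unit_l)
  show ?thesis
    by (rule lin_ext[where F="\<lambda>X. hmul2 mu (hv_tens eta eta) X" and G="\<lambda>X. X"])
      ((rule lin_intros)+, rule *)
qed

lemma hmul2_unit_r: "hmul2 mu X (hv_tens eta eta) = X"
proof -
  have *: "hmul2 mu (e p) (hv_tens eta eta) = e p" for p
    by (simp only: basis_pair[of p] hmul2_tens unit_r)
  show ?thesis
    by (rule lin_ext[where F="\<lambda>X. hmul2 mu X (hv_tens eta eta)" and G="\<lambda>X. X"])
      ((rule lin_intros)+, rule *)
qed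

lemma hmul2_sums: "hmul2 mu (hv_lin (\<lambda>(a, b). hv_tens (X a b) (Y a b)) T) (hv_lin (\<lambda>(c, d). hv_tens (Z c d) (W c d)) U)
  = hv_lin (\<lambda>(a, b). hv_lin (\<lambda>(c, d). hv_tens (m (X a b) (Z c d)) (m (Y a b) (W c d))) U) T"
  apply (subst bilin_push[where \<Phi>="hmul2 mu"])
    apply ((rule lin_intros)+)[2]
  apply (simp add: split_def hmul2_tens)
  done

lemma R_as_sum: "T = hv_lin (\<lambda>(a, b). hv_tens (e a) (e b)) T"
  by (simp add: hv_lin_basis_id split_def)

lemma eps_tens: "hv_lin (\<lambda>(a, b). hv_smul (eps a) (e b)) (hv_tens x y) = hv_smul (hv_fun eps x) y"
proof -
  have "hv_lin (\<lambda>(a, b). (\<lambda>u v. hv_smul (hv_fun eps u) v) (e a) (e b)) (hv_tens x y) = hv_smul (hv_fun eps x) y"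
    by (rule bilin_tens) (auto simp: lin_def hv_fun_add hv_fun_smul hv_smul_add_sc hv_smul_add_vec hv_smul_mult mult.commute intro!: lin_intros)
  then show ?thesis by simp
qed

end

locale sqt = hopf mu eta delta eps S
  for mu :: "'b \<Rightarrow> 'b \<Rightarrow> ('b \<Rightarrow>\<^sub>0 'k::field)"
    and eta :: "'b \<Rightarrow>\<^sub>0 'k"
    and delta :: "'b \<Rightarrow> ('b \<times> 'b \<Rightarrow>\<^sub>0 'k)"
    and eps :: "'b \<Rightarrow> 'k"
    and S :: "'b \<Rightarrow> ('b \<Rightarrow>\<^sub>0 'k)" +
  fixes R :: "'b \<times> 'b \<Rightarrow>\<^sub>0 'k" and Rb :: "'b \<times> 'b \<Rightarrow>\<^sub>0 'k"
  assumes RRb: "hmul2 mu R Rb = hv_tens eta eta"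
    and RbR: "hmul2 mu Rb R = hv_tens eta eta"
    and ax1: "hv_lin (\<lambda>(r1, r2). hv_lin (\<lambda>(p, q). hv_basis (p, q, r2)) (delta r1)) R
       = hv_lin (\<lambda>(r1, r2). hv_lin (\<lambda>(s1, s2).
            hv_tens (hv_basis r1) (hv_tens (hv_basis s1) (hmul mu (hv_basis r2) (hv_basis s2)))) R) R"
    and ax2: "hv_lin (\<lambda>(r1, r2). hv_tens (hv_basis r1) (delta r2)) R
       = hv_lin (\<lambda>(r1, r2). hv_lin (\<lambda>(s1, s2).
            hv_tens (hmul mu (hv_basis r1) (hv_basis s1)) (hv_tens (hv_basis s2) (hv_basis r2))) R) R"
    and ax3: "hv_lin (\<lambda>(r1, r2). hv_lin (\<lambda>(s1, s2). hv_lin (\<lambda>(p, q).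
            hv_tens (hv_basis r1) (hv_tens (hmul mu (hv_basis q) (hv_basis s1)) (hmul mu (hv_basis p) (hv_basis s2))))
          (delta r2)) R) R
       = hv_lin (\<lambda>(r1, r2). hv_lin (\<lambda>(s1, s2). hv_lin (\<lambda>(p, q).
            hv_tens (hv_basis r1) (hv_tens (hmul mu (hv_basis s1) (hv_basis p)) (hmul mu (hv_basis s2) (hv_basis q))))
          (delta r2)) R) R"
    and ax4: "hv_lin (\<lambda>(r1, r2). hv_lin (\<lambda>(s1, s2). hv_lin (\<lambda>(p, q).
            hv_tens (hmul mu (hv_basis q) (hv_basis s1)) (hv_tens (hmul mu (hv_basis p) (hv_basis s2)) (hv_basis r2)))
          (delta r1)) R) R
       = hv_lin (\<lambda>(r1, r2). hv_lin (\<lambda>(s1, s2). hv_lin (\<lambda>(p, q).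
            hv_tens (hmul mu (hv_basis s1) (hv_basis p)) (hv_tens (hmul mu (hv_basis s2) (hv_basis q)) (hv_basis r2)))
          (delta r1)) R) R"
begin

lemma ax1G:
  assumes "\<And>a b. lin (G a b)"
  shows "hv_lin (\<lambda>(r1, r2). hv_lin (\<lambda>(p, q). G p q (e r2)) (delta r1)) R =
    hv_lin (\<lambda>(r1, r2). hv_lin (\<lambda>(s1, s2). G r1 s1 (m (e r2) (e s2))) R) R"
proof -
  have "hv_lin (\<lambda>(p, q, c). G p q (e c)) (hv_lin (\<lambda>(r1, r2). hv_lin (\<lambda>(p, q). hv_basis (p, q, r2)) (delta r1)) R)
    = hv_lin (\<lambda>(p, q, c). G p q (e c)) (hv_lin (\<lambda>(r1, r2). hv_lin (\<lambda>(s1, s2).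
            hv_tens (hv_basis r1) (hv_tens (hv_basis s1) (hmul mu (hv_basis r2) (hv_basis s2)))) R) R)"
    by (simp only: ax1)
  then show ?thesis
    by (simp add: hv_lin_comp prod.case_distrib hv_lin_tens lin_rep[OF assms])
qed

lemma ax2G:
  assumes "\<And>b c. lin (\<lambda>x. G x b c)"
  shows "hv_lin (\<lambda>(r1, r2). hv_lin (\<lambda>(p, q). G (e r1) p q) (delta r2)) R =
    hv_lin (\<lambda>(r1, r2). hv_lin (\<lambda>(s1, s2). G (m (e r1) (e s1)) s2 r2) R) R"
proof -
  have "hv_lin (\<lambda>(a, p, q). G (e a) p q) (hv_lin (\<lambda>(r1, r2). hv_tens (hv_basis r1) (delta r2)) R)
    = hv_lin (\<lambda>(a, p, q). G (e a) p q) (hv_lin (\<lambda>(r1, r2). hv_lin (\<lambda>(s1, s2).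
            hv_tens (hmul mu (hv_basis r1) (hv_basis s1)) (hv_tens (hv_basis s2) (hv_basis r2))) R) R)"
    by (simp only: ax2)
  then show ?thesis
    by (simp add: hv_lin_comp prod.case_distrib hv_lin_tens lin_rep[OF assms])
qed

lemma ax3G:
  assumes "\<And>a y. lin (\<lambda>x. G a x y)" "\<And>a x. lin (\<lambda>y. G a x y)"
  shows "hv_lin (\<lambda>(r1, r2). hv_lin (\<lambda>(s1, s2). hv_lin (\<lambda>(p, q).
            G r1 (m (e q) (e s1)) (m (e p) (e s2))) (delta r2)) R) R
       = hv_lin (\<lambda>(r1, r2). hv_lin (\<lambda>(s1, s2). hv_lin (\<lambda>(p, q).
            G r1 (m (e s1) (e p)) (m (e s2) (e q))) (delta r2)) R) R"
proof -
  have bt: "hv_lin (\<lambda>(b, c). G a (e b) (e c)) (hv_tens X Y) = G a X Y" for a X Y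
    by (rule bilin_tens) (rule assms)+
  have tl: "hv_lin F (hv_tens (e a) Y) = hv_lin (\<lambda>c. F (a, c)) Y" for F :: "'b \<times> 'b \<times> 'b \<Rightarrow> 'c \<Rightarrow>\<^sub>0 'k" and a Y
    by (simp add: hv_lin_tens)
  have "hv_lin (\<lambda>(a, b, c). G a (e b) (e c)) (hv_lin (\<lambda>(r1, r2). hv_lin (\<lambda>(s1, s2). hv_lin (\<lambda>(p, q).
            hv_tens (hv_basis r1) (hv_tens (hmul mu (hv_basis q) (hv_basis s1)) (hmul mu (hv_basis p) (hv_basis s2))))
          (delta r2)) R) R)
       = hv_lin (\<lambda>(a, b, c). G a (e b) (e c)) (hv_lin (\<lambda>(r1, r2). hv_lin (\<lambda>(s1, s2). hv_lin (\<lambda>(p, q).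
            hv_tens (hv_basis r1) (hv_tens (hmul mu (hv_basis s1) (hv_basis p)) (hmul mu (hv_basis s2) (hv_basis q))))
          (delta r2)) R) R)"
    by (simp only: ax3)
  then show ?thesis
    by (simp add: hv_lin_comp prod.case_distrib tl bt del: hv_tens_basis)
qed

lemma ax4G:
  assumes "\<And>c y. lin (\<lambda>x. G x y c)" "\<And>c x. lin (\<lambda>y. G x y c)"
  shows "hv_lin (\<lambda>(r1, r2). hv_lin (\<lambda>(s1, s2). hv_lin (\<lambda>(p, q).
            G (m (e q) (e s1)) (m (e p) (e s2)) r2) (delta r1)) R) R
       = hv_lin (\<lambda>(r1, r2). hv_lin (\<lambda>(s1, s2). hv_lin (\<lambda>(p, q).
            G (m (e s1) (e p)) (m (e s2) (e q)) r2) (delta r1)) R) R"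
proof -
  have tt: "hv_lin (\<lambda>(a, b, c). G (e a) (e b) c) (hv_tens X (hv_tens Y (e r))) = G X Y r" for X Y r
  proof -
    have "hv_lin (\<lambda>(a, b, c). G (e a) (e b) c) (hv_tens X (hv_tens Y (e r))) =
        hv_lin (\<lambda>(a, b). G (e a) (e b) r) (hv_tens X Y)"
      by (simp add: hv_lin_tens del: hv_tens_basis)
    also have "\<dots> = G X Y r"
      by (rule bilin_tens[where \<Phi>="\<lambda>x y. G x y r"]) (rule assms)+
    finally show ?thesis .
  qed
  have "hv_lin (\<lambda>(a, b, c). G (e a) (e b) c) (hv_lin (\<lambda>(r1, r2). hv_lin (\<lambda>(s1, s2). hv_lin (\<lambda>(p, q).
            hv_tens (hmul mu (hv_basis q) (hv_basis s1)) (hv_tens (hmul mu (hv_basis p) (hv_basis s2)) (hv_basis r2)))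
          (delta r1)) R) R)
       = hv_lin (\<lambda>(a, b, c). G (e a) (e b) c) (hv_lin (\<lambda>(r1, r2). hv_lin (\<lambda>(s1, s2). hv_lin (\<lambda>(p, q).
            hv_tens (hmul mu (hv_basis s1) (hv_basis p)) (hv_tens (hmul mu (hv_basis s2) (hv_basis q)) (hv_basis r2)))
          (delta r1)) R) R)"
    by (simp only: ax4)
  then show ?thesis
    by (simp add: hv_lin_comp prod.case_distrib tt del: hv_tens_basis)
qed

end

lemma push_smul_l: "lin L \<Longrightarrow> hv_lin (\<lambda>(a, b). hv_smul (f a) (L (hv_basis b))) T = L (hv_lin (\<lambda>(a, b). hv_smul (f a) (hv_basis b)) T)"
  by (simp add: lin_push prod.case_distrib linD)
lemma push_smul_r: "lin L \<Longrightarrow> hv_lin (\<lambda>(a, b). hv_smul (f b) (L (hv_basis a))) T = L (hv_lin (\<lambda>(a, b). hv_smul (f b) (hv_basis a)) T)"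
  by (simp add: lin_push prod.case_distrib linD)

context hopf
begin

lemma hmul2_tens_left: "hmul2 mu (hv_tens x y) T = hv_lin (\<lambda>(c, d). hv_tens (m x (e c)) (m y (e d))) T"
proof -
  have *: "hmul2 mu (hv_tens x y) (e p) = hv_lin (\<lambda>(c, d). hv_tens (m x (e c)) (m y (e d))) (e p)" for p
    by (subst basis_pair[of p], subst hmul2_tens) (simp add: split_def)
  show ?thesis
    by (rule lin_ext[where F="\<lambda>T. hmul2 mu (hv_tens x y) T" and G="\<lambda>T. hv_lin (\<lambda>(c, d). hv_tens (m x (e c)) (m y (e d))) T"])
      ((rule lin_intros)+, rule *)
qed

lemma eps_tens_r: "hv_lin (\<lambda>(a, b). hv_smul (eps b) (e a)) (hv_tens x y) = hv_smul (hv_fun eps y) x"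
proof -
  have "hv_lin (\<lambda>(a, b). (\<lambda>u v. hv_smul (hv_fun eps v) u) (e a) (e b)) (hv_tens x y) = hv_smul (hv_fun eps y) x"
    by (rule bilin_tens) (auto simp: lin_def hv_fun_add hv_fun_smul hv_smul_add_sc hv_smul_add_vec hv_smul_mult mult.commute intro!: lin_intros)
  then show ?thesis by simp
qed

end

context sqt
begin

definition "E = hv_lin (\<lambda>(a, b). hv_smul (eps a) (e b)) R"
definition "F = hv_lin (\<lambda>(a, b). hv_smul (eps b) (e a)) R"
definition "RS = hv_lin (\<lambda>(a, b). hv_tens (Sv (e a)) (e b)) R"
definition "RSS = hv_lin (\<lambda>(a, b). hv_tens (Sv (e a)) (Sv (e b))) R"

lemma E_eta: "E = eta"
proof -
  have "hv_lin (\<lambda>(r1, r2). hv_lin (\<lambda>(p, q). hv_smul (eps p) (hv_tens (e q) (e r2))) (delta r1)) R =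
    hv_lin (\<lambda>(r1, r2). hv_lin (\<lambda>(s1, s2). hv_smul (eps r1) (hv_tens (e s1) (m (e r2) (e s2)))) R) R"
    by (rule ax1G[where G="\<lambda>p q z. hv_smul (eps p) (hv_tens (e q) z)"]) (rule lin_intros)+
  moreover have "hv_lin (\<lambda>(r1, r2). hv_lin (\<lambda>(p, q). hv_smul (eps p) (hv_tens (e q) (e r2))) (delta r1)) R = R"
    by (simp only: counit_l R_as_sum[symmetric])
  moreover have "hv_lin (\<lambda>(r1, r2). hv_lin (\<lambda>(s1, s2). hv_smul (eps r1) (hv_tens (e s1) (m (e r2) (e s2)))) R) R
     = hmul2 mu (hv_tens eta E) R"
  proof -
    have "hv_lin (\<lambda>(r1, r2). hv_lin (\<lambda>(s1, s2). hv_smul (eps r1) (hv_tens (e s1) (m (e r2) (e s2)))) R) R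
      = hv_lin (\<lambda>(s1, s2). hv_lin (\<lambda>(r1, r2). hv_smul (eps r1) (hv_tens (e s1) (m (e r2) (e s2)))) R) R"
      by (rule swap2)
    also have "\<dots> = hv_lin (\<lambda>(s1, s2). hv_tens (e s1) (m E (e s2))) R"
    proof (rule hv_lin_cong2)
      fix s1 s2
      show "hv_lin (\<lambda>(r1, r2). hv_smul (eps r1) (hv_tens (e s1) (m (e r2) (e s2)))) R = hv_tens (e s1) (m E (e s2))"
        unfolding E_def by (rule push_smul_l[where L="\<lambda>z. hv_tens (e s1) (m z (e s2))"]) (rule lin_intros)+
    qed
    finally show ?thesis by (simp add: hmul2_tens_left)
  qed
  ultimately have "R = hmul2 mu (hv_tens eta E) R" by simp
  then have "hv_tens eta eta = hmul2 mu (hmul2 mu (hv_tens eta E) R) Rb"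
    using RRb by simp
  then have "hv_tens eta eta = hmul2 mu (hv_tens eta E) (hv_tens eta eta)"
    by (simp only: hmul2_assoc RRb)
  then have "hv_tens eta eta = hv_tens eta E" by (simp add: hmul2_tens)
  then have "hv_lin (\<lambda>(a, b). hv_smul (eps a) (e b)) (hv_tens eta eta) = hv_lin (\<lambda>(a, b). hv_smul (eps a) (e b)) (hv_tens eta E)"
    by simp
  then show ?thesis by (simp add: eps_tens eps_eta)
qed

lemma F_eta: "F = eta"
proof -
  have "hv_lin (\<lambda>(r1, r2). hv_lin (\<lambda>(p, q). hv_smul (eps q) (hv_tens (e r1) (e p))) (delta r2)) R =
    hv_lin (\<lambda>(r1, r2). hv_lin (\<lambda>(s1, s2). hv_smul (eps r2) (hv_tens (m (e r1) (e s1)) (e s2))) R) R"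
    by (rule ax2G[where G="\<lambda>x p q. hv_smul (eps q) (hv_tens x (e p))"]) (rule lin_intros)+
  moreover have "hv_lin (\<lambda>(r1, r2). hv_lin (\<lambda>(p, q). hv_smul (eps q) (hv_tens (e r1) (e p))) (delta r2)) R = R"
    by (simp only: counit_r R_as_sum[symmetric])
  moreover have "hv_lin (\<lambda>(r1, r2). hv_lin (\<lambda>(s1, s2). hv_smul (eps r2) (hv_tens (m (e r1) (e s1)) (e s2))) R) R
     = hmul2 mu (hv_tens F eta) R"
  proof -
    have "hv_lin (\<lambda>(r1, r2). hv_lin (\<lambda>(s1, s2). hv_smul (eps r2) (hv_tens (m (e r1) (e s1)) (e s2))) R) R
      = hv_lin (\<lambda>(s1, s2). hv_lin (\<lambda>(r1, r2). hv_smul (eps r2) (hv_tens (m (e r1) (e s1)) (e s2))) R) R"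
      by (rule swap2)
    also have "\<dots> = hv_lin (\<lambda>(s1, s2). hv_tens (m F (e s1)) (e s2)) R"
    proof (rule hv_lin_cong2)
      fix s1 s2
      show "hv_lin (\<lambda>(r1, r2). hv_smul (eps r2) (hv_tens (m (e r1) (e s1)) (e s2))) R = hv_tens (m F (e s1)) (e s2)"
        unfolding F_def by (rule push_smul_r[where L="\<lambda>z. hv_tens (m z (e s1)) (e s2)"]) (rule lin_intros)+
    qed
    finally show ?thesis by (simp add: hmul2_tens_left)
  qed
  ultimately have "R = hmul2 mu (hv_tens F eta) R" by simp
  then have "hv_tens eta eta = hmul2 mu (hmul2 mu (hv_tens F eta) R) Rb"
    using RRb by simp
  then have "hv_tens eta eta = hmul2 mu (hv_tens F eta) (hv_tens eta eta)"
    by (simp only: hmul2_assoc RRb)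
  then have "hv_tens eta eta = hv_tens F eta" by (simp add: hmul2_tens)
  then have "hv_lin (\<lambda>(a, b). hv_smul (eps b) (e a)) (hv_tens eta eta) = hv_lin (\<lambda>(a, b). hv_smul (eps b) (e a)) (hv_tens F eta)"
    by simp
  then show ?thesis by (simp add: eps_tens_r eps_eta)
qed

lemma RS_R: "hmul2 mu RS R = hv_tens eta eta"
proof -
  have "hv_lin (\<lambda>(r1, r2). hv_lin (\<lambda>(p, q). hv_tens (m (Sv (e p)) (e q)) (e r2)) (delta r1)) R =
    hv_lin (\<lambda>(r1, r2). hv_lin (\<lambda>(s1, s2). hv_tens (m (Sv (e r1)) (e s1)) (m (e r2) (e s2))) R) R"
    by (rule ax1G[where G="\<lambda>p q z. hv_tens (m (Sv (e p)) (e q)) z"]) (rule lin_intros)+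
  moreover have "hv_lin (\<lambda>(r1, r2). hv_lin (\<lambda>(p, q). hv_tens (m (Sv (e p)) (e q)) (e r2)) (delta r1)) R
     = hv_tens eta eta"
  proof -
    have "hv_lin (\<lambda>(r1, r2). hv_lin (\<lambda>(p, q). hv_tens (m (Sv (e p)) (e q)) (e r2)) (delta r1)) R
      = hv_lin (\<lambda>(r1, r2). hv_smul (eps r1) (hv_tens eta (e r2))) R"
    proof (rule hv_lin_cong2)
      fix r1 r2
      show "hv_lin (\<lambda>(p, q). hv_tens (m (Sv (e p)) (e q)) (e r2)) (delta r1) = hv_smul (eps r1) (hv_tens eta (e r2))"
        by (rule antipode_l[where L="\<lambda>z. hv_tens z (e r2)"]) (rule lin_intros)+
    qed
    also have "\<dots> = hv_tens eta E"
      unfolding E_def by (rule push_smul_l[where L="\<lambda>z. hv_tens eta z"]) (rule lin_intros)+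
    finally show ?thesis by (simp add: E_eta)
  qed
  moreover have "hv_lin (\<lambda>(r1, r2). hv_lin (\<lambda>(s1, s2). hv_tens (m (Sv (e r1)) (e s1)) (m (e r2) (e s2))) R) R
      = hmul2 mu RS R"
    unfolding RS_def by (subst (2) R_as_sum) (simp only: hmul2_sums)
  ultimately show ?thesis by simp
qed

lemma RSS_RS: "hmul2 mu RSS RS = hv_tens eta eta"
proof -
  have "hv_lin (\<lambda>(r1, r2). hv_lin (\<lambda>(p, q). hv_tens (Sv (e r1)) (m (Sv (e p)) (e q))) (delta r2)) R =
    hv_lin (\<lambda>(r1, r2). hv_lin (\<lambda>(s1, s2). hv_tens (Sv (m (e r1) (e s1))) (m (Sv (e s2)) (e r2))) R) R"
    by (rule ax2G[where G="\<lambda>x p q. hv_tens (Sv x) (m (Sv (e p)) (e q))"]) (rule lin_intros)+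
  moreover have "hv_lin (\<lambda>(r1, r2). hv_lin (\<lambda>(p, q). hv_tens (Sv (e r1)) (m (Sv (e p)) (e q))) (delta r2)) R
     = hv_tens eta eta"
  proof -
    have "hv_lin (\<lambda>(r1, r2). hv_lin (\<lambda>(p, q). hv_tens (Sv (e r1)) (m (Sv (e p)) (e q))) (delta r2)) R
      = hv_lin (\<lambda>(r1, r2). hv_smul (eps r2) (hv_tens (Sv (e r1)) eta)) R"
    proof (rule hv_lin_cong2)
      fix r1 r2
      show "hv_lin (\<lambda>(p, q). hv_tens (Sv (e r1)) (m (Sv (e p)) (e q))) (delta r2) = hv_smul (eps r2) (hv_tens (Sv (e r1)) eta)"
        by (rule antipode_l[where L="\<lambda>z. hv_tens (Sv (e r1)) z"]) (rule lin_intros)+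
    qed
    also have "\<dots> = hv_tens (Sv F) eta"
      unfolding F_def by (rule push_smul_r[where L="\<lambda>z. hv_tens (Sv z) eta"]) (rule lin_intros)+
    finally show ?thesis by (simp add: F_eta S_eta)
  qed
  moreover have "hv_lin (\<lambda>(r1, r2). hv_lin (\<lambda>(s1, s2). hv_tens (Sv (m (e r1) (e s1))) (m (Sv (e s2)) (e r2))) R) R
      = hmul2 mu RSS RS"
  proof -
    have "hv_lin (\<lambda>(r1, r2). hv_lin (\<lambda>(s1, s2). hv_tens (Sv (m (e r1) (e s1))) (m (Sv (e s2)) (e r2))) R) R
      = hv_lin (\<lambda>(r1, r2). hv_lin (\<lambda>(s1, s2). hv_tens (m (Sv (e s1)) (Sv (e r1))) (m (Sv (e s2)) (e r2))) R) R"
      by (simp only: S_anti)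
    also have "\<dots> = hv_lin (\<lambda>(s1, s2). hv_lin (\<lambda>(r1, r2). hv_tens (m (Sv (e s1)) (Sv (e r1))) (m (Sv (e s2)) (e r2))) R) R"
      by (rule swap2)
    also have "\<dots> = hmul2 mu RSS RS"
      unfolding RS_def RSS_def by (simp only: hmul2_sums)
    finally show ?thesis .
  qed
  ultimately show ?thesis by simp
qed

lemma RSS_R: "RSS = R"
proof -
  have "RSS = hmul2 mu RSS (hmul2 mu RS R)" by (simp add: RS_R hmul2_unit_r)
  also have "\<dots> = R" by (simp only: hmul2_assoc[symmetric] RSS_RS hmul2_unit_l)
  finally show ?thesis .
qed

lemma SS:
  assumes "\<And>y. lin (\<lambda>x. G x y)" "\<And>x. lin (\<lambda>y. G x y)"
  shows "hv_lin (\<lambda>(a, b). G (Sv (e a)) (Sv (e b))) R = hv_lin (\<lambda>(a, b). G (e a) (e b)) R"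
proof -
  have "hv_lin (\<lambda>(a, b). G (e a) (e b)) RSS = hv_lin (\<lambda>(a, b). G (Sv (e a)) (Sv (e b))) R"
    unfolding RSS_def by (simp add: hv_lin_comp prod.case_distrib bilin_tens[OF assms])
  then show ?thesis by (simp add: RSS_R)
qed

end

context hopf
begin

lemma m_push_l: "m (hv_lin f x) y = hv_lin (\<lambda>a. m (f a) y) x"
  by (rule lin_push) (rule lin_intros)+
lemma m_push_r: "m y (hv_lin f x) = hv_lin (\<lambda>a. m y (f a)) x"
  by (rule lin_push) (rule lin_intros)+
lemma S_push: "Sv (hv_lin f x) = hv_lin (\<lambda>a. Sv (f a)) x"
  by (rule lin_push) (rule lin_intros)+

lemma S2_mult: "Sv (Sv (m x y)) = m (Sv (Sv x)) (Sv (Sv y))"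
  by (simp add: S_anti)

end

context sqt
begin

definition "u = hv_lin (\<lambda>(r1, r2). m (Sv (e r2)) (e r1)) R"

lemma u_def': "drinfeld_u mu S R = u"
  by (simp add: drinfeld_u_def u_def)

lemma S2u: "Sv (Sv u) = u"
proof -
  have "Sv (Sv u) = hv_lin (\<lambda>(r1, r2). m (Sv (Sv (Sv (e r2)))) (Sv (Sv (e r1)))) R"
    unfolding u_def by (simp add: S_push prod.case_distrib S_anti)
  also have "\<dots> = hv_lin (\<lambda>(r1, r2). m (Sv (Sv (e r2))) (Sv (e r1))) R"
    using SS[where G="\<lambda>x y. m (Sv (Sv y)) (Sv x)"] by (simp add: lin_intros)
  also have "\<dots> = u"
    using SS[where G="\<lambda>x y. m (Sv y) x"] unfolding u_def by (simp add: lin_intros)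
  finally show ?thesis .
qed

lemma S2v: assumes "m u v = eta" "m v u = eta" shows "Sv (Sv v) = v"
proof -
  have "Sv (Sv v) = m (Sv (Sv v)) (m u v)" by (simp add: assms)
  also have "\<dots> = m (m (Sv (Sv v)) (Sv (Sv u))) v" by (simp add: assoc S2u)
  also have "\<dots> = v" by (simp only: S2_mult[symmetric] assms S_eta unit_l)
  finally show ?thesis .
qed

lemma M1: "m u (e y) = hv_lin (\<lambda>(x, r). hv_lin (\<lambda>(p, q). m (m (Sv (Sv (e r))) (Sv (e q))) (m u (e p))) (delta x)) (delta y)"
proof -
  have "hv_lin (\<lambda>(x, r). hv_lin (\<lambda>(p, q). m (m (Sv (Sv (e r))) (Sv (e q))) (m u (e p))) (delta x)) (delta y)
     = hv_lin (\<lambda>(p, z). hv_lin (\<lambda>(q, r). m (m (Sv (Sv (e r))) (Sv (e q))) (m u (e p))) (delta z)) (delta y)"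
    by (rule coassoc)
  also have "\<dots> = hv_lin (\<lambda>(p, z). hv_smul (eps z) (m u (e p))) (delta y)"
  proof (rule hv_lin_cong2)
    fix p z
    have "hv_lin (\<lambda>(q, r). m (m (Sv (Sv (e r))) (Sv (e q))) (m u (e p))) (delta z)
       = hv_lin (\<lambda>(q, r). (\<lambda>w. m (Sv w) (m u (e p))) (m (e q) (Sv (e r)))) (delta z)"
      by (simp add: S_anti)
    also have "\<dots> = hv_smul (eps z) (m (Sv eta) (m u (e p)))"
      by (rule antipode_r) (rule lin_intros)+
    finally show "hv_lin (\<lambda>(q, r). m (m (Sv (Sv (e r))) (Sv (e q))) (m u (e p))) (delta z) = hv_smul (eps z) (m u (e p))"
      by (simp add: S_eta)
  qed
  also have "\<dots> = m u (e y)" by (rule counit_r)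
  finally show ?thesis by simp
qed

end

context sqt
begin

lemma L2U:
  assumes l1: "\<And>y. lin (\<lambda>x. \<Phi> x y)" and l2: "\<And>x. lin (\<lambda>y. \<Phi> x y)"
  shows "hv_lin (\<lambda>(r1, r2). \<Phi> (e r1) (m u (e r2))) R = hv_lin (\<lambda>(r1, r2). \<Phi> (e r1) (m (Sv (Sv (e r2))) u)) R"
proof -
  define W where "W r3 q p s1 s2 = m (Sv (Sv (e r3))) (m (Sv (m (e s2) (e q))) (m (e s1) (e p)))" for r3 q p s1 s2
  define G where "G X x r3 = hv_lin (\<lambda>(p, q). hv_lin (\<lambda>(s1, s2). \<Phi> X (W r3 q p s1 s2)) R) (delta x)" for X x r3
  have a: "\<Phi> X (m u (e y)) = hv_lin (\<lambda>(x, r3). G X x r3) (delta y)" for X y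
    unfolding G_def W_def
    apply (subst M1)
    apply (simp add: u_def m_push_l m_push_r lin_push[OF l2] split_def assoc S_anti)
    done
  have b: "hv_lin (\<lambda>(r1, r2). \<Phi> (e r1) (m u (e r2))) R = 
     hv_lin (\<lambda>(r1, r2). hv_lin (\<lambda>(s1, s2). G (m (e r1) (e s1)) s2 r2) R) R"
    unfolding a
    by (rule ax2G) (unfold G_def, (rule lin_comp_c[OF l1] lin_intros)+)
  have c: "hv_lin (\<lambda>(a, b). G (m (e r1) (e a)) b r2) R = \<Phi> (e r1) (m (Sv (Sv (e r2))) u)" for r1 r2
  proof -
    have "hv_lin (\<lambda>(a, b). G (m (e r1) (e a)) b r2) R =
      hv_lin (\<lambda>(a, b). hv_lin (\<lambda>(s1, s2). hv_lin (\<lambda>(p, q). \<Phi> (m (e r1) (e a))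
         (m (Sv (Sv (e r2))) (m (Sv (m (e s2) (e q))) (m (e s1) (e p))))) (delta b)) R) R"
      unfolding G_def W_def by (rule hv_lin_cong2) (rule swap2)
    also have "\<dots> = hv_lin (\<lambda>(a, b). hv_lin (\<lambda>(s1, s2). hv_lin (\<lambda>(p, q). \<Phi> (m (e r1) (e a))
         (m (Sv (Sv (e r2))) (m (Sv (m (e p) (e s2))) (m (e q) (e s1))))) (delta b)) R) R"
      by (rule ax3G[where G="\<lambda>a X Y. \<Phi> (m (e r1) (e a)) (m (Sv (Sv (e r2))) (m (Sv Y) X))", symmetric])
        (rule lin_comp_c[OF l2] lin_intros)+
    also have "\<dots> = hv_lin (\<lambda>(a, b). hv_lin (\<lambda>(s1, s2). hv_smul (eps b) (\<Phi> (m (e r1) (e a))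
         (m (Sv (Sv (e r2))) (m (Sv (e s2)) (e s1))))) R) R"
    proof (rule hv_lin_cong2, rule hv_lin_cong2)
      fix a b s1 s2
      have "hv_lin (\<lambda>(p, q). \<Phi> (m (e r1) (e a)) (m (Sv (Sv (e r2))) (m (Sv (m (e p) (e s2))) (m (e q) (e s1))))) (delta b)
        = hv_lin (\<lambda>(p, q). (\<lambda>z. \<Phi> (m (e r1) (e a)) (m (Sv (Sv (e r2))) (m (Sv (e s2)) (m z (e s1))))) (m (Sv (e p)) (e q))) (delta b)"
        by (simp add: S_anti assoc)
      also have "\<dots> = hv_smul (eps b) (\<Phi> (m (e r1) (e a)) (m (Sv (Sv (e r2))) (m (Sv (e s2)) (m eta (e s1)))))"
        by (rule antipode_l) (rule lin_comp_c[OF l2] lin_intros)+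
      finally show "hv_lin (\<lambda>(p, q). \<Phi> (m (e r1) (e a)) (m (Sv (Sv (e r2))) (m (Sv (m (e p) (e s2))) (m (e q) (e s1))))) (delta b)
        = hv_smul (eps b) (\<Phi> (m (e r1) (e a)) (m (Sv (Sv (e r2))) (m (Sv (e s2)) (e s1))))" by simp
    qed
    also have "\<dots> = hv_lin (\<lambda>(s1, s2). hv_lin (\<lambda>(a, b). hv_smul (eps b) (\<Phi> (m (e r1) (e a))
         (m (Sv (Sv (e r2))) (m (Sv (e s2)) (e s1))))) R) R"
      by (rule swap2)
    also have "\<dots> = hv_lin (\<lambda>(s1, s2). \<Phi> (m (e r1) F) (m (Sv (Sv (e r2))) (m (Sv (e s2)) (e s1)))) R"
    proof (rule hv_lin_cong2)
      fix s1 s2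
      show "hv_lin (\<lambda>(a, b). hv_smul (eps b) (\<Phi> (m (e r1) (e a)) (m (Sv (Sv (e r2))) (m (Sv (e s2)) (e s1))))) R
         = \<Phi> (m (e r1) F) (m (Sv (Sv (e r2))) (m (Sv (e s2)) (e s1)))"
        unfolding F_def
        by (rule push_smul_r[where L="\<lambda>z. \<Phi> (m (e r1) z) (m (Sv (Sv (e r2))) (m (Sv (e s2)) (e s1)))"])
          (rule lin_comp_c[OF l1] lin_intros)+
    qed
    also have "\<dots> = \<Phi> (e r1) (m (Sv (Sv (e r2))) u)"
      by (simp add: F_eta u_def m_push_r lin_push[OF l2] split_def)
    finally show ?thesis .
  qed
  show ?thesis unfolding b c ..
qed

lemma L1U:
  assumes l1: "\<And>y. lin (\<lambda>x. \<Phi> x y)" and l2: "\<And>x. lin (\<lambda>y. \<Phi> x y)"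
  shows "hv_lin (\<lambda>(r1, r2). \<Phi> (m u (e r1)) (e r2)) R = hv_lin (\<lambda>(r1, r2). \<Phi> (m (Sv (Sv (e r1))) u) (e r2)) R"
proof -
  define W where "W r3 q p s1 s2 = m (Sv (Sv (e r3))) (m (Sv (m (e s2) (e q))) (m (e s1) (e p)))" for r3 q p s1 s2
  define G where "G x r3 Y = hv_lin (\<lambda>(p, q). hv_lin (\<lambda>(s1, s2). \<Phi> (W r3 q p s1 s2) Y) R) (delta x)" for x r3 Y
  have a: "\<Phi> (m u (e y)) Y = hv_lin (\<lambda>(x, r3). G x r3 Y) (delta y)" for Y y
    unfolding G_def W_def
    apply (subst M1)
    apply (simp add: u_def m_push_l m_push_r lin_push[OF l1] split_def assoc S_anti)
    done
  have b: "hv_lin (\<lambda>(r1, r2). \<Phi> (m u (e r1)) (e r2)) R = 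
     hv_lin (\<lambda>(r1, r2). hv_lin (\<lambda>(s1, s2). G r1 s1 (m (e r2) (e s2))) R) R"
    unfolding a
    by (rule ax1G) (unfold G_def, (rule lin_comp_c[OF l2] lin_intros)+)
  have b2: "hv_lin (\<lambda>(r1, r2). hv_lin (\<lambda>(s1, s2). G r1 s1 (m (e r2) (e s2))) R) R =
    hv_lin (\<lambda>(a, b). hv_lin (\<lambda>(r1, r2). hv_lin (\<lambda>(s1, s2). hv_lin (\<lambda>(p, q). \<Phi>
         (m (Sv (Sv (e a))) (m (Sv (m (e s2) (e q))) (m (e s1) (e p)))) (m (e r2) (e b))) (delta r1)) R) R) R"
  proof -
    have "hv_lin (\<lambda>(r1, r2). hv_lin (\<lambda>(s1, s2). G r1 s1 (m (e r2) (e s2))) R) R =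
      hv_lin (\<lambda>(r1, r2). hv_lin (\<lambda>(a, b). hv_lin (\<lambda>(s1, s2). hv_lin (\<lambda>(p, q). \<Phi>
         (m (Sv (Sv (e a))) (m (Sv (m (e s2) (e q))) (m (e s1) (e p)))) (m (e r2) (e b))) (delta r1)) R) R) R"
      unfolding G_def W_def by (rule hv_lin_cong2, rule hv_lin_cong2) (rule swap2)
    also have "\<dots> = hv_lin (\<lambda>(a, b). hv_lin (\<lambda>(r1, r2). hv_lin (\<lambda>(s1, s2). hv_lin (\<lambda>(p, q). \<Phi>
         (m (Sv (Sv (e a))) (m (Sv (m (e s2) (e q))) (m (e s1) (e p)))) (m (e r2) (e b))) (delta r1)) R) R) R"
      by (rule swap2)
    finally show ?thesis .
  qed
  have c: "hv_lin (\<lambda>(r1, r2). hv_lin (\<lambda>(s1, s2). hv_lin (\<lambda>(p, q). \<Phi>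
         (m (Sv (Sv (e a))) (m (Sv (m (e s2) (e q))) (m (e s1) (e p)))) (m (e r2) (e b))) (delta r1)) R) R
     = \<Phi> (m (Sv (Sv (e a))) u) (e b)" for a b
  proof -
    have "hv_lin (\<lambda>(r1, r2). hv_lin (\<lambda>(s1, s2). hv_lin (\<lambda>(p, q). \<Phi>
         (m (Sv (Sv (e a))) (m (Sv (m (e s2) (e q))) (m (e s1) (e p)))) (m (e r2) (e b))) (delta r1)) R) R
      = hv_lin (\<lambda>(r1, r2). hv_lin (\<lambda>(s1, s2). hv_lin (\<lambda>(p, q). \<Phi>
         (m (Sv (Sv (e a))) (m (Sv (m (e p) (e s2))) (m (e q) (e s1)))) (m (e r2) (e b))) (delta r1)) R) R"
      by (rule ax4G[where G="\<lambda>X Y c. \<Phi> (m (Sv (Sv (e a))) (m (Sv Y) X)) (m (e c) (e b))", symmetric])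
        (rule lin_comp_c[OF l1] lin_intros)+
    also have "\<dots> = hv_lin (\<lambda>(r1, r2). hv_lin (\<lambda>(s1, s2). hv_smul (eps r1) (\<Phi>
         (m (Sv (Sv (e a))) (m (Sv (e s2)) (e s1))) (m (e r2) (e b)))) R) R"
    proof (rule hv_lin_cong2, rule hv_lin_cong2)
      fix r1 r2 s1 s2
      have "hv_lin (\<lambda>(p, q). \<Phi> (m (Sv (Sv (e a))) (m (Sv (m (e p) (e s2))) (m (e q) (e s1)))) (m (e r2) (e b))) (delta r1)
        = hv_lin (\<lambda>(p, q). (\<lambda>z. \<Phi> (m (Sv (Sv (e a))) (m (Sv (e s2)) (m z (e s1)))) (m (e r2) (e b))) (m (Sv (e p)) (e q))) (delta r1)"
        by (simp add: S_anti assoc)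
      also have "\<dots> = hv_smul (eps r1) (\<Phi> (m (Sv (Sv (e a))) (m (Sv (e s2)) (m eta (e s1)))) (m (e r2) (e b)))"
        by (rule antipode_l) (rule lin_comp_c[OF l1] lin_intros)+
      finally show "hv_lin (\<lambda>(p, q). \<Phi> (m (Sv (Sv (e a))) (m (Sv (m (e p) (e s2))) (m (e q) (e s1)))) (m (e r2) (e b))) (delta r1)
        = hv_smul (eps r1) (\<Phi> (m (Sv (Sv (e a))) (m (Sv (e s2)) (e s1))) (m (e r2) (e b)))" by simp
    qed
    also have "\<dots> = hv_lin (\<lambda>(s1, s2). hv_lin (\<lambda>(r1, r2). hv_smul (eps r1) (\<Phi>
         (m (Sv (Sv (e a))) (m (Sv (e s2)) (e s1))) (m (e r2) (e b)))) R) R"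
      by (rule swap2)
    also have "\<dots> = hv_lin (\<lambda>(s1, s2). \<Phi> (m (Sv (Sv (e a))) (m (Sv (e s2)) (e s1))) (m E (e b))) R"
    proof (rule hv_lin_cong2)
      fix s1 s2
      show "hv_lin (\<lambda>(r1, r2). hv_smul (eps r1) (\<Phi> (m (Sv (Sv (e a))) (m (Sv (e s2)) (e s1))) (m (e r2) (e b)))) R
         = \<Phi> (m (Sv (Sv (e a))) (m (Sv (e s2)) (e s1))) (m E (e b))"
        unfolding E_def
        by (rule push_smul_l[where L="\<lambda>z. \<Phi> (m (Sv (Sv (e a))) (m (Sv (e s2)) (e s1))) (m z (e b))"])
          (rule lin_comp_c[OF l2] lin_intros)+
    qed
    also have "\<dots> = \<Phi> (m (Sv (Sv (e a))) u) (e b)"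
      by (simp add: E_eta u_def m_push_r lin_push[OF l1] split_def)
    finally show ?thesis .
  qed
  show ?thesis unfolding b b2 c ..
qed

end

context sqt
begin

lemma Su_A: "Sv u = hv_lin (\<lambda>(r1, r2). m (e r1) (Sv (e r2))) R"
proof -
  have "Sv u = hv_lin (\<lambda>(r1, r2). m (Sv (e r1)) (Sv (Sv (e r2)))) R"
    unfolding u_def by (simp add: S_push prod.case_distrib S_anti)
  also have "\<dots> = hv_lin (\<lambda>(r1, r2). m (e r1) (Sv (e r2))) R"
    using SS[where G="\<lambda>x y. m x (Sv y)"] by (simp add: lin_intros)
  finally show ?thesis .
qed

lemma Su_B: "Sv u = hv_lin (\<lambda>(r1, r2). m (Sv (e r1)) (Sv (Sv (e r2)))) R"
  unfolding u_def by (simp add: S_push prod.case_distrib S_anti)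

lemma u_comm: "m u (Sv u) = m (Sv u) u"
proof -
  have "m u (Sv u) = hv_lin (\<lambda>(r1, r2). m (m u (e r1)) (Sv (e r2))) R"
    unfolding Su_A by (simp add: m_push_r prod.case_distrib assoc)
  also have "\<dots> = hv_lin (\<lambda>(r1, r2). m (m (Sv (Sv (e r1))) u) (Sv (e r2))) R"
    by (rule L1U[where \<Phi>="\<lambda>x y. m x (Sv y)"]) (rule lin_intros)+
  also have "\<dots> = hv_lin (\<lambda>(r1, r2). m (m (Sv (e r1)) u) (e r2)) R"
    using SS[where G="\<lambda>x y. m (m (Sv x) u) y"] by (simp add: lin_intros)
  also have "\<dots> = hv_lin (\<lambda>(r1, r2). m (Sv (e r1)) (m u (e r2))) R"
    by (simp add: assoc)
  also have "\<dots> = hv_lin (\<lambda>(r1, r2). m (Sv (e r1)) (m (Sv (Sv (e r2))) u)) R"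
    by (rule L2U[where \<Phi>="\<lambda>x y. m (Sv x) y"]) (rule lin_intros)+
  also have "\<dots> = m (Sv u) u"
    unfolding Su_B by (simp add: m_push_l split_def assoc)
  finally show ?thesis .
qed

end

theorem corollary3p5:
  fixes mu :: "'b \<Rightarrow> 'b \<Rightarrow> ('b \<Rightarrow>\<^sub>0 'k::field)"
    and eta :: "'b \<Rightarrow>\<^sub>0 'k"
    and delta :: "'b \<Rightarrow> ('b \<times> 'b \<Rightarrow>\<^sub>0 'k)"
    and eps :: "'b \<Rightarrow> 'k"
    and S :: "'b \<Rightarrow> ('b \<Rightarrow>\<^sub>0 'k)"
    and R :: "'b \<times> 'b \<Rightarrow>\<^sub>0 'k"
  assumes "semiquasitriangular mu eta delta eps S R"
  shows "hS S (hS S (drinfeld_u mu S R)) = drinfeld_u mu S R \<and>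
         (\<forall>v. hmul mu (drinfeld_u mu S R) v = eta \<and> hmul mu v (drinfeld_u mu S R) = eta
              \<longrightarrow> hS S (hS S v) = v) \<and>
         hmul mu (drinfeld_u mu S R) (hS S (drinfeld_u mu S R))
           = hmul mu (hS S (drinfeld_u mu S R)) (drinfeld_u mu S R)"
proof -
  from assms obtain Rb where H: "hopf_algebra mu eta delta eps S"
    and r1: "hmul2 mu R Rb = hv_tens eta eta" and r2: "hmul2 mu Rb R = hv_tens eta eta"
    and a1: "hv_lin (\<lambda>(r1, r2). hv_lin (\<lambda>(p, q). hv_basis (p, q, r2)) (delta r1)) R
       = hv_lin (\<lambda>(r1, r2). hv_lin (\<lambda>(s1, s2).
            hv_tens (hv_basis r1) (hv_tens (hv_basis s1) (hmul mu (hv_basis r2) (hv_basis s2)))) R) R"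
    and a2: "hv_lin (\<lambda>(r1, r2). hv_tens (hv_basis r1) (delta r2)) R
       = hv_lin (\<lambda>(r1, r2). hv_lin (\<lambda>(s1, s2).
            hv_tens (hmul mu (hv_basis r1) (hv_basis s1)) (hv_tens (hv_basis s2) (hv_basis r2))) R) R"
    and a3: "hv_lin (\<lambda>(r1, r2). hv_lin (\<lambda>(s1, s2). hv_lin (\<lambda>(p, q).
            hv_tens (hv_basis r1) (hv_tens (hmul mu (hv_basis q) (hv_basis s1)) (hmul mu (hv_basis p) (hv_basis s2))))
          (delta r2)) R) R
       = hv_lin (\<lambda>(r1, r2). hv_lin (\<lambda>(s1, s2). hv_lin (\<lambda>(p, q).
            hv_tens (hv_basis r1) (hv_tens (hmul mu (hv_basis s1) (hv_basis p)) (hmul mu (hv_basis s2) (hv_basis q))))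
          (delta r2)) R) R"
    and a4: "hv_lin (\<lambda>(r1, r2). hv_lin (\<lambda>(s1, s2). hv_lin (\<lambda>(p, q).
            hv_tens (hmul mu (hv_basis q) (hv_basis s1)) (hv_tens (hmul mu (hv_basis p) (hv_basis s2)) (hv_basis r2)))
          (delta r1)) R) R
       = hv_lin (\<lambda>(r1, r2). hv_lin (\<lambda>(s1, s2). hv_lin (\<lambda>(p, q).
            hv_tens (hmul mu (hv_basis s1) (hv_basis p)) (hv_tens (hmul mu (hv_basis s2) (hv_basis q)) (hv_basis r2)))
          (delta r1)) R) R"
    unfolding semiquasitriangular_def by blast
  interpret sqt mu eta delta eps S R Rb
    by unfold_locales (rule H r1 r2 a1 a2 a3 a4)+
  show ?thesis
    unfolding u_def' using S2u S2v u_comm by blast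
qed

end
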